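(* Let $\Sigma$ be a finite set, $I\subseteq\Sigma\times\Sigma$ a symmetric irreflexive relation, $M=M(\Sigma,I)$, and $n\ge 1$. If the graph $\Gamma(M)$ contains no complete subgraph with more than $n$ vertices (equivalently, there are no $n+1$ distinct pairwise commuting letters in $\Sigma$), then the homological dimension of $M$ is at most $n$, i.e. the trivial module $\mathbb{Z}$ has a projective (indeed free) resolution over $\mathbb{Z}M$ of length at most $n$.
   Context: For a finite alphabet $\Sigma$ and a symmetric irreflexive relation $I\subseteq \Sigma\times\Sigma$, the free partially commutative monoid $M(\Sigma,I)$ is the monoid with presentation $\langle \Sigma \mid ab=ba \text{ for all } (a,b)\in I\rangle$. Its graph $\Gamma(M)$ is the simple undirected graph with vertex set $\Sigma$ in which $a,b$ are adjacent iff $(a,b)\in I$. The homological dimension of a monoid $M$ is the projective dimension of the trivial $\mathbb{Z}M$-module $\mathbb{Z}$ (with $n\cdot m=n$ for $m\in M$). *)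

theory Defs
  imports Main
begin

definition tstep :: "('a \<times> 'a) set \<Rightarrow> ('a list \<times> 'a list) set" where
  "tstep I = {(u @ [a, b] @ v, u @ [b, a] @ v) | u v a b. (a, b) \<in> I}"

definition tr_eq :: "('a \<times> 'a) set \<Rightarrow> ('a list \<times> 'a list) set" where
  "tr_eq I = (tstep I \<union> (tstep I)\<inverse>)\<^sup>*"

definition trace :: "('a \<times> 'a) set \<Rightarrow> 'a list \<Rightarrow> 'a list set" where
  "trace I w = tr_eq I `` {w}"

definition tmon :: "'a set \<Rightarrow> ('a \<times> 'a) set \<Rightarrow> 'a list set set" where
  "tmon Sig I = {trace I w | w. set w \<subseteq> Sig}"

definition tmult :: "('a \<times> 'a) set \<Rightarrow> 'a list set \<Rightarrow> 'a list set \<Rightarrow> 'a list set" where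
  "tmult I x y = trace I ((SOME u. u \<in> x) @ (SOME v. v \<in> y))"

text \<open>The free left ZM-module with basis J (J a set of natural numbers):
  finitely supported integer functions on J x M.\<close>
definition free_mod :: "'a set \<Rightarrow> ('a \<times> 'a) set \<Rightarrow> nat set
    \<Rightarrow> (nat \<times> 'a list set \<Rightarrow> int) set" where
  "free_mod Sig I J = {f. finite {p. f p \<noteq> 0} \<and>
     (\<forall>j x. f (j, x) \<noteq> 0 \<longrightarrow> j \<in> J \<and> x \<in> tmon Sig I)}"

definition act :: "('a \<times> 'a) set \<Rightarrow> 'a list set
    \<Rightarrow> (nat \<times> 'a list set \<Rightarrow> int) \<Rightarrow> (nat \<times> 'a list set \<Rightarrow> int)" where
  "act I m f = (\<lambda>(j, x). \<Sum>y \<in> {y. f (j, y) \<noteq> 0 \<and> tmult I m y = x}. f (j, y))"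

definition fadd :: "(nat \<times> 'a list set \<Rightarrow> int) \<Rightarrow> (nat \<times> 'a list set \<Rightarrow> int)
    \<Rightarrow> (nat \<times> 'a list set \<Rightarrow> int)" where
  "fadd f g = (\<lambda>p. f p + g p)"

text \<open>ZM-linear maps between free modules (additive and M-equivariant,
  which is equivalent to ZM-linearity).\<close>
definition zm_hom :: "'a set \<Rightarrow> ('a \<times> 'a) set \<Rightarrow> nat set \<Rightarrow> nat set
    \<Rightarrow> ((nat \<times> 'a list set \<Rightarrow> int) \<Rightarrow> (nat \<times> 'a list set \<Rightarrow> int)) \<Rightarrow> bool" where
  "zm_hom Sig I J K d \<longleftrightarrow>
     d ` free_mod Sig I J \<subseteq> free_mod Sig I K \<and>
     (\<forall>f \<in> free_mod Sig I J. \<forall>g \<in> free_mod Sig I J. d (fadd f g) = fadd (d f) (d g)) \<and>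
     (\<forall>m \<in> tmon Sig I. \<forall>f \<in> free_mod Sig I J. d (act I m f) = act I m (d f))"

definition augmentation :: "'a set \<Rightarrow> ('a \<times> 'a) set \<Rightarrow> nat set
    \<Rightarrow> ((nat \<times> 'a list set \<Rightarrow> int) \<Rightarrow> int) \<Rightarrow> bool" where
  "augmentation Sig I J e \<longleftrightarrow>
     (\<forall>f \<in> free_mod Sig I J. \<forall>g \<in> free_mod Sig I J. e (fadd f g) = e f + e g) \<and>
     (\<forall>m \<in> tmon Sig I. \<forall>f \<in> free_mod Sig I J. e (act I m f) = e f) \<and>
     e ` free_mod Sig I J = UNIV"

text \<open>An exact sequence 0 -> F_n -> ... -> F_1 -> F_0 -> Z -> 0 of free ZM-modules
  (some F_k may be zero, so this is a free resolution of length at most n).\<close>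
definition free_resolution :: "'a set \<Rightarrow> ('a \<times> 'a) set \<Rightarrow> nat \<Rightarrow> (nat \<Rightarrow> nat set)
    \<Rightarrow> (nat \<Rightarrow> (nat \<times> 'a list set \<Rightarrow> int) \<Rightarrow> (nat \<times> 'a list set \<Rightarrow> int))
    \<Rightarrow> ((nat \<times> 'a list set \<Rightarrow> int) \<Rightarrow> int) \<Rightarrow> bool" where
  "free_resolution Sig I n J d e \<longleftrightarrow>
     1 \<le> n \<and>
     augmentation Sig I (J 0) e \<and>
     (\<forall>k \<in> {1..n}. zm_hom Sig I (J k) (J (k - 1)) (d k)) \<and>
     d 1 ` free_mod Sig I (J 1) = {f \<in> free_mod Sig I (J 0). e f = 0} \<and>
     (\<forall>k. 1 \<le> k \<and> k < n \<longrightarrow>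
        d (k + 1) ` free_mod Sig I (J (k + 1)) = {f \<in> free_mod Sig I (J k). d k f = (\<lambda>_. 0)}) \<and>
     inj_on (d n) (free_mod Sig I (J n))"

definition has_free_resolution_le :: "'a set \<Rightarrow> ('a \<times> 'a) set \<Rightarrow> nat \<Rightarrow> bool" where
  "has_free_resolution_le Sig I n \<longleftrightarrow> (\<exists>J d e. free_resolution Sig I n J d e)"

end

theory Submission
  imports Defs "HOL-Library.Nat_Bijection"
begin


definition supp :: "('p \<Rightarrow> int) \<Rightarrow> 'p set" where "supp f = {p. f p \<noteq> 0}"
definition lin :: "('p \<Rightarrow> 'q \<Rightarrow> int) \<Rightarrow> ('p \<Rightarrow> int) \<Rightarrow> 'q \<Rightarrow> int" where
  "lin D f = (\<lambda>q. \<Sum>p\<in>supp f. f p * D p q)"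
definition esum :: "('p \<Rightarrow> int) \<Rightarrow> int" where "esum f = (\<Sum>p\<in>supp f. f p)"
definition dl :: "'p \<Rightarrow> 'p \<Rightarrow> int" where "dl p = (\<lambda>q. if q = p then 1 else 0)"

lemma lin_eq:
  assumes "finite S" "supp f \<subseteq> S"
  shows "lin D f q = (\<Sum>p\<in>S. f p * D p q)"
  unfolding lin_def using assms
  by (intro sum.mono_neutral_left) (auto simp: supp_def)

lemma esum_eq:
  assumes "finite S" "supp f \<subseteq> S"
  shows "esum f = (\<Sum>p\<in>S. f p)"
  unfolding esum_def using assms
  by (intro sum.mono_neutral_left) (auto simp: supp_def)

lemma supp_add: "supp (\<lambda>p. f p + g p) \<subseteq> supp f \<union> supp g"
  by (auto simp: supp_def)
lemma supp_diff: "supp (\<lambda>p. f p - g p) \<subseteq> supp f \<union> supp g"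
  by (auto simp: supp_def)

lemma lin_add:
  assumes "finite (supp f)" "finite (supp g)"
  shows "lin D (\<lambda>p. f p + g p) = (\<lambda>q. lin D f q + lin D g q)"
proof
  fix q
  let ?S = "supp f \<union> supp g"
  have "lin D (\<lambda>p. f p + g p) q = (\<Sum>p\<in>?S. (f p + g p) * D p q)"
    using assms supp_add[of f g] by (intro lin_eq) auto
  also have "\<dots> = (\<Sum>p\<in>?S. f p * D p q) + (\<Sum>p\<in>?S. g p * D p q)"
    by (simp add: distrib_right sum.distrib)
  also have "\<dots> = lin D f q + lin D g q"
  proof -
    have "lin D f q = (\<Sum>p\<in>?S. f p * D p q)" by (rule lin_eq) (use assms in auto)
    moreover have "lin D g q = (\<Sum>p\<in>?S. g p * D p q)" by (rule lin_eq) (use assms in auto)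
    ultimately show ?thesis by simp
  qed
  finally show "lin D (\<lambda>p. f p + g p) q = lin D f q + lin D g q" .
qed

lemma lin_diff:
  assumes "finite (supp f)" "finite (supp g)"
  shows "lin D (\<lambda>p. f p - g p) = (\<lambda>q. lin D f q - lin D g q)"
proof
  fix q
  let ?S = "supp f \<union> supp g"
  have "lin D (\<lambda>p. f p - g p) q = (\<Sum>p\<in>?S. (f p - g p) * D p q)"
    using assms supp_diff[of f g] by (intro lin_eq) auto
  also have "\<dots> = (\<Sum>p\<in>?S. f p * D p q) - (\<Sum>p\<in>?S. g p * D p q)"
    by (simp add: left_diff_distrib sum_subtractf)
  also have "\<dots> = lin D f q - lin D g q"
  proof -
    have "lin D f q = (\<Sum>p\<in>?S. f p * D p q)" by (rule lin_eq) (use assms in auto)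
    moreover have "lin D g q = (\<Sum>p\<in>?S. g p * D p q)" by (rule lin_eq) (use assms in auto)
    ultimately show ?thesis by simp
  qed
  finally show "lin D (\<lambda>p. f p - g p) q = lin D f q - lin D g q" .
qed

lemma lin_zero[simp]: "lin D (\<lambda>_. 0) = (\<lambda>_. 0)"
  by (simp add: lin_def supp_def)

lemma supp_zero[simp]: "supp (\<lambda>_. 0) = {}"
  by (simp add: supp_def)

lemma lin_D_add: "lin (\<lambda>p q. D p q + D' p q) f = (\<lambda>q. lin D f q + lin D' f q)"
  by (simp add: lin_def distrib_left sum.distrib)

lemma lin_D_diff: "lin (\<lambda>p q. D p q - D' p q) f = (\<lambda>q. lin D f q - lin D' f q)"
  by (simp add: lin_def right_diff_distrib sum_subtractf)

lemma lin_cong: "(\<And>p. p \<in> supp f \<Longrightarrow> D p = D' p) \<Longrightarrow> lin D f = lin D' f"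
  by (simp add: lin_def)

lemma supp_sum_dl: "supp (\<lambda>q. \<Sum>i\<in>A. w i * dl (g i) q) \<subseteq> g ` A"
proof
  fix q assume "q \<in> supp (\<lambda>q. \<Sum>i\<in>A. w i * dl (g i) q)"
  then have "(\<Sum>i\<in>A. w i * dl (g i) q) \<noteq> 0" by (simp add: supp_def)
  then obtain i where "i \<in> A" "w i * dl (g i) q \<noteq> 0"
    by (meson sum.neutral)
  then show "q \<in> g ` A" by (auto simp: dl_def split: if_splits)
qed

lemma finite_supp_sum_dl: "finite A \<Longrightarrow> finite (supp (\<lambda>q. \<Sum>i\<in>A. w i * dl (g i) q))"
  by (rule finite_subset[OF supp_sum_dl]) simp

lemma lin_sum_dl:
  assumes "finite A"
  shows "lin D (\<lambda>q. \<Sum>i\<in>A. w i * dl (g i) q) = (\<lambda>q. \<Sum>i\<in>A. w i * D (g i) q)"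
proof
  fix q
  have "lin D (\<lambda>q. \<Sum>i\<in>A. w i * dl (g i) q) q
      = (\<Sum>p\<in>g ` A. (\<Sum>i\<in>A. w i * dl (g i) p) * D p q)"
    using assms supp_sum_dl[of w g A] by (intro lin_eq) auto
  also have "\<dots> = (\<Sum>p\<in>g ` A. \<Sum>i\<in>A. w i * dl (g i) p * D p q)"
    by (simp add: sum_distrib_right)
  also have "\<dots> = (\<Sum>i\<in>A. \<Sum>p\<in>g ` A. w i * dl (g i) p * D p q)"
    by (rule sum.swap)
  also have "\<dots> = (\<Sum>i\<in>A. w i * D (g i) q)"
  proof (rule sum.cong[OF refl])
    fix i assume "i \<in> A"
    have "(\<Sum>p\<in>g ` A. w i * dl (g i) p * D p q) = (\<Sum>p\<in>g ` A. if p = g i then w i * D p q else 0)"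
      by (rule sum.cong) (auto simp: dl_def)
    also have "\<dots> = w i * D (g i) q"
      using assms \<open>i \<in> A\<close> by (simp add: sum.delta)
    finally show "(\<Sum>p\<in>g ` A. w i * dl (g i) p * D p q) = w i * D (g i) q" .
  qed
  finally show "lin D (\<lambda>q. \<Sum>i\<in>A. w i * dl (g i) q) q = (\<Sum>i\<in>A. w i * D (g i) q)" .
qed

lemma supp_dl: "supp (dl p) = {p}"
  by (auto simp: supp_def dl_def)

lemma lin_dl: "lin D (dl p) = D p"
proof
  fix q
  have "lin D (dl p) q = (\<Sum>p'\<in>{p}. dl p p' * D p' q)" by (rule lin_eq) (simp_all add: supp_dl)
  then show "lin D (dl p) q = D p q" by (simp add: dl_def)
qed

lemma lin_scaled_dl: "lin D (\<lambda>q. w * dl p q) = (\<lambda>q. w * D p q)"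
  using lin_sum_dl[of "{()}" D "\<lambda>_. w" "\<lambda>_. p"] by simp

lemma esum_sum_dl:
  assumes "finite A"
  shows "esum (\<lambda>q. \<Sum>i\<in>A. w i * dl (g i) q) = (\<Sum>i\<in>A. w i)"
proof -
  have "esum (\<lambda>q. \<Sum>i\<in>A. w i * dl (g i) q) = (\<Sum>p\<in>g ` A. \<Sum>i\<in>A. w i * dl (g i) p)"
    using assms supp_sum_dl[of w g A] by (intro esum_eq) auto
  also have "\<dots> = (\<Sum>i\<in>A. \<Sum>p\<in>g ` A. w i * dl (g i) p)"
    by (rule sum.swap)
  also have "\<dots> = (\<Sum>i\<in>A. w i)"
  proof (rule sum.cong[OF refl])
    fix i assume "i \<in> A"
    have "(\<Sum>p\<in>g ` A. w i * dl (g i) p) = (\<Sum>p\<in>g ` A. if p = g i then w i else 0)"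
      by (rule sum.cong) (auto simp: dl_def)
    also have "\<dots> = w i"
      using assms \<open>i \<in> A\<close> by (simp add: sum.delta)
    finally show "(\<Sum>p\<in>g ` A. w i * dl (g i) p) = w i" .
  qed
  finally show ?thesis .
qed

lemma lin_id:
  assumes "finite (supp f)"
  shows "lin dl f = f"
proof
  fix q
  have "lin dl f q = (\<Sum>p\<in>insert q (supp f). f p * dl p q)"
    using assms by (intro lin_eq) auto
  also have "\<dots> = (\<Sum>p\<in>insert q (supp f). if p = q then f q else 0)"
    by (rule sum.cong) (auto simp: dl_def)
  also have "\<dots> = f q" using assms by (simp add: sum.delta')
  finally show "lin dl f q = f q" .
qed

lemma supp_lin:
  "supp (lin D f) \<subseteq> (\<Union>p\<in>supp f. supp (D p))"
proof
  fix q assume "q \<in> supp (lin D f)"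
  then have "(\<Sum>p\<in>supp f. f p * D p q) \<noteq> 0" by (simp add: supp_def lin_def)
  then obtain p where "p \<in> supp f" "f p * D p q \<noteq> 0" by (meson sum.neutral)
  then show "q \<in> (\<Union>p\<in>supp f. supp (D p))" by (auto simp: supp_def)
qed

lemma finite_supp_lin:
  assumes "finite (supp f)" "\<And>p. p \<in> supp f \<Longrightarrow> finite (supp (D p))"
  shows "finite (supp (lin D f))"
  using assms by (intro finite_subset[OF supp_lin]) auto

lemma lin_comp:
  assumes "finite (supp f)" "\<And>p. p \<in> supp f \<Longrightarrow> finite (supp (D p))"
  shows "lin E (lin D f) = lin (\<lambda>p. lin E (D p)) f"
proof
  fix q
  let ?T = "\<Union>p\<in>supp f. supp (D p)"
  have fT: "finite ?T" using assms by auto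
  have "lin E (lin D f) q = (\<Sum>r\<in>?T. lin D f r * E r q)"
    using fT supp_lin[of D f] by (intro lin_eq) auto
  also have "\<dots> = (\<Sum>r\<in>?T. (\<Sum>p\<in>supp f. f p * D p r) * E r q)"
    by (simp add: lin_def)
  also have "\<dots> = (\<Sum>r\<in>?T. \<Sum>p\<in>supp f. f p * (D p r * E r q))"
    by (simp add: sum_distrib_right mult.assoc)
  also have "\<dots> = (\<Sum>p\<in>supp f. \<Sum>r\<in>?T. f p * (D p r * E r q))"
    by (rule sum.swap)
  also have "\<dots> = (\<Sum>p\<in>supp f. f p * lin E (D p) q)"
  proof (rule sum.cong[OF refl])
    fix p assume p: "p \<in> supp f"
    have "lin E (D p) q = (\<Sum>r\<in>?T. D p r * E r q)"
      using fT p by (intro lin_eq) auto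
    then show "(\<Sum>r\<in>?T. f p * (D p r * E r q)) = f p * lin E (D p) q"
      by (simp add: sum_distrib_left)
  qed
  also have "\<dots> = lin (\<lambda>p. lin E (D p)) f q" by (simp add: lin_def)
  finally show "lin E (lin D f) q = lin (\<lambda>p. lin E (D p)) f q" .
qed

lemma esum_lin:
  assumes "finite (supp f)" "\<And>p. p \<in> supp f \<Longrightarrow> finite (supp (D p))"
  shows "esum (lin D f) = (\<Sum>p\<in>supp f. f p * esum (D p))"
proof -
  let ?T = "\<Union>p\<in>supp f. supp (D p)"
  have fT: "finite ?T" using assms by auto
  have "esum (lin D f) = (\<Sum>r\<in>?T. lin D f r)"
    using fT supp_lin[of D f] by (intro esum_eq) auto
  also have "\<dots> = (\<Sum>r\<in>?T. \<Sum>p\<in>supp f. f p * D p r)"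
    by (simp add: lin_def)
  also have "\<dots> = (\<Sum>p\<in>supp f. \<Sum>r\<in>?T. f p * D p r)"
    by (rule sum.swap)
  also have "\<dots> = (\<Sum>p\<in>supp f. f p * esum (D p))"
  proof (rule sum.cong[OF refl])
    fix p assume p: "p \<in> supp f"
    have "esum (D p) = (\<Sum>r\<in>?T. D p r)"
      using fT p by (intro esum_eq) auto
    then show "(\<Sum>r\<in>?T. f p * D p r) = f p * esum (D p)"
      by (simp add: sum_distrib_left)
  qed
  finally show ?thesis .
qed

lemma esum_add:
  assumes "finite (supp f)" "finite (supp g)"
  shows "esum (\<lambda>p. f p + g p) = esum f + esum g"
proof -
  let ?S = "supp f \<union> supp g"
  have "esum (\<lambda>p. f p + g p) = (\<Sum>p\<in>?S. f p + g p)"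
    using assms supp_add[of f g] by (intro esum_eq) auto
  also have "\<dots> = esum f + esum g"
  proof -
    have "esum f = (\<Sum>p\<in>?S. f p)" by (rule esum_eq) (use assms in auto)
    moreover have "esum g = (\<Sum>p\<in>?S. g p)" by (rule esum_eq) (use assms in auto)
    ultimately show ?thesis by (simp add: sum.distrib)
  qed
  finally show ?thesis .
qed

lemma esum_diff:
  assumes "finite (supp f)" "finite (supp g)"
  shows "esum (\<lambda>p. f p - g p) = esum f - esum g"
proof -
  let ?S = "supp f \<union> supp g"
  have "esum (\<lambda>p. f p - g p) = (\<Sum>p\<in>?S. f p - g p)"
    using assms supp_diff[of f g] by (intro esum_eq) auto
  also have "\<dots> = esum f - esum g"
  proof -
    have "esum f = (\<Sum>p\<in>?S. f p)" by (rule esum_eq) (use assms in auto)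
    moreover have "esum g = (\<Sum>p\<in>?S. g p)" by (rule esum_eq) (use assms in auto)
    ultimately show ?thesis by (simp add: sum_subtractf)
  qed
  finally show ?thesis .
qed

lemma esum_zero[simp]: "esum (\<lambda>_. 0) = 0"
  by (simp add: esum_def)


definition rl :: "'a \<Rightarrow> 'a list \<Rightarrow> 'a list" where
  "rl a xs = rev (remove1 a (rev xs))"

lemma rl_snoc_same[simp]: "rl a (xs @ [a]) = xs"
  by (simp add: rl_def)
lemma rl_snoc_other: "b \<noteq> a \<Longrightarrow> rl a (xs @ [b]) = rl a xs @ [b]"
  by (simp add: rl_def)
lemma rl_app_in: "a \<in> set ys \<Longrightarrow> rl a (xs @ ys) = xs @ rl a ys"
  by (simp add: rl_def remove1_append)
lemma rl_app_notin: "a \<notin> set ys \<Longrightarrow> rl a (xs @ ys) = rl a xs @ ys"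
  by (simp add: rl_def remove1_append)
lemma length_rl: "a \<in> set xs \<Longrightarrow> length (rl a xs) = length xs - 1"
  by (simp add: rl_def length_remove1)

lemma tstep_app: "(u, v) \<in> tstep I \<Longrightarrow> (p @ u @ q, p @ v @ q) \<in> tstep I"
proof -
  assume "(u, v) \<in> tstep I"
  then obtain u0 v0 a b where "u = u0 @ [a, b] @ v0" "v = u0 @ [b, a] @ v0" "(a, b) \<in> I"
    unfolding tstep_def by blast
  then show ?thesis unfolding tstep_def
    by (intro CollectI exI[of _ "p @ u0"] exI[of _ "v0 @ q"] exI[of _ a] exI[of _ b]) simp
qed

lemma tstep_sym: "sym I \<Longrightarrow> (u, v) \<in> tstep I \<Longrightarrow> (v, u) \<in> tstep I"
proof -
  assume "sym I" "(u, v) \<in> tstep I"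
  then obtain u0 v0 a b where "u = u0 @ [a, b] @ v0" "v = u0 @ [b, a] @ v0" "(a, b) \<in> I"
    unfolding tstep_def by blast
  then show ?thesis using \<open>sym I\<close> unfolding tstep_def
    by (intro CollectI exI[of _ u0] exI[of _ v0] exI[of _ b] exI[of _ a]) (simp add: symD)
qed

lemma tr_eq_refl[simp]: "(u, u) \<in> tr_eq I"
  by (simp add: tr_eq_def)

lemma tr_eq_sym: "(u, v) \<in> tr_eq I \<Longrightarrow> (v, u) \<in> tr_eq I"
proof -
  have "sym (tstep I \<union> (tstep I)\<inverse>)" by (auto simp: sym_def)
  then show "(u, v) \<in> tr_eq I \<Longrightarrow> (v, u) \<in> tr_eq I"
    unfolding tr_eq_def by (meson sym_rtrancl symD)
qed

lemma tr_eq_trans: "(u, v) \<in> tr_eq I \<Longrightarrow> (v, w) \<in> tr_eq I \<Longrightarrow> (u, w) \<in> tr_eq I"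
  unfolding tr_eq_def by (rule rtrancl_trans)

lemma tr_eq_step: "(u, v) \<in> tstep I \<Longrightarrow> (u, v) \<in> tr_eq I"
  unfolding tr_eq_def by auto

lemma tr_eq_swap: "(a, b) \<in> I \<Longrightarrow> (p @ [a, b] @ q, p @ [b, a] @ q) \<in> tr_eq I"
  by (rule tr_eq_step) (auto simp: tstep_def)

lemma tr_eq_induct[consumes 1, case_names refl step]:
  assumes "(u, v) \<in> tr_eq I"
    and "P u"
    and "\<And>x y. P x \<Longrightarrow> (x, y) \<in> tstep I \<or> (y, x) \<in> tstep I \<Longrightarrow> P y"
  shows "P v"
  using assms(1) unfolding tr_eq_def
proof (induction rule: rtrancl_induct)
  case base then show ?case using assms(2) by simp
next
  case (step y z) then show ?case using assms(3) by blast
qed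

lemma tr_eq_app: "(u, v) \<in> tr_eq I \<Longrightarrow> (p @ u @ q, p @ v @ q) \<in> tr_eq I"
proof (induction rule: tr_eq_induct)
  case refl then show ?case by simp
next
  case (step x y)
  then have "(p @ x @ q, p @ y @ q) \<in> tstep I \<or> (p @ y @ q, p @ x @ q) \<in> tstep I"
    using tstep_app by blast
  then have "(p @ x @ q, p @ y @ q) \<in> tr_eq I"
    using tr_eq_step tr_eq_sym by blast
  then show ?case using step.IH tr_eq_trans by blast
qed

lemma tr_eq_cong: "(u, u') \<in> tr_eq I \<Longrightarrow> (v, v') \<in> tr_eq I \<Longrightarrow> (u @ v, u' @ v') \<in> tr_eq I"
  using tr_eq_app[of u u' I "[]" v] tr_eq_app[of v v' I u' "[]"] tr_eq_trans by auto

lemma tr_eq_invariant: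
  assumes "(u, v) \<in> tr_eq I" "\<And>x y. (x, y) \<in> tstep I \<Longrightarrow> F x = F y"
  shows "F u = F v"
  using assms(1) by (induction rule: tr_eq_induct) (use assms(2) in auto)

lemma tstep_length: "(x, y) \<in> tstep I \<Longrightarrow> length x = length y"
  unfolding tstep_def by auto
lemma tstep_set: "(x, y) \<in> tstep I \<Longrightarrow> set x = set y"
  unfolding tstep_def by auto

lemma tr_eq_length: "(u, v) \<in> tr_eq I \<Longrightarrow> length u = length v"
  by (rule tr_eq_invariant) (auto dest: tstep_length)
lemma tr_eq_set: "(u, v) \<in> tr_eq I \<Longrightarrow> set u = set v"
  by (rule tr_eq_invariant) (auto dest: tstep_set)

lemma rl_tstep:
  assumes "(u, v) \<in> tstep I"
  shows "(rl a u, rl a v) \<in> tr_eq I"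
proof -
  obtain p q x y where uv: "u = p @ [x, y] @ q" "v = p @ [y, x] @ q" "(x, y) \<in> I"
    using assms unfolding tstep_def by blast
  show ?thesis
  proof (cases "a \<in> set q")
    case True
    have "rl a u = (p @ [x, y]) @ rl a q" unfolding uv(1)
      using rl_app_in[OF True, of "p @ [x, y]"] by simp
    moreover have "rl a v = (p @ [y, x]) @ rl a q" unfolding uv(2)
      using rl_app_in[OF True, of "p @ [y, x]"] by simp
    ultimately show ?thesis using tr_eq_swap[OF uv(3), of p "rl a q"] by simp
  next
    case False
    show ?thesis
    proof (cases "x = y")
      case True then show ?thesis using uv by simp
    next
      case xy: False
      have ru: "rl a u = rl a (p @ [x, y]) @ q" unfolding uv(1)
        using rl_app_notin[OF False, of "p @ [x, y]"] by simp
      have rv: "rl a v = rl a (p @ [y, x]) @ q" unfolding uv(2)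
        using rl_app_notin[OF False, of "p @ [y, x]"] by simp
      consider "a = y" | "a = x" | "a \<noteq> x \<and> a \<noteq> y" by blast
      then show ?thesis
      proof cases
        case 1
        have "rl a (p @ [x, y]) = p @ [x]" using 1 rl_snoc_same[of a "p @ [x]"] by simp
        moreover have "rl a (p @ [y, x]) = p @ [x]"
          using 1 xy rl_snoc_other[of x a "p @ [y]"] rl_snoc_same[of a p] by simp
        ultimately show ?thesis using ru rv by simp
      next
        case 2
        have "rl a (p @ [y, x]) = p @ [y]" using 2 rl_snoc_same[of a "p @ [y]"] by simp
        moreover have "rl a (p @ [x, y]) = p @ [y]"
          using 2 xy rl_snoc_other[of y a "p @ [x]"] rl_snoc_same[of a p] by simp
        ultimately show ?thesis using ru rv by simp
      next
        case 3
        then have "a \<notin> set [x, y]" "a \<notin> set [y, x]" by auto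
        then have "rl a (p @ [x, y]) = rl a p @ [x, y]" "rl a (p @ [y, x]) = rl a p @ [y, x]"
          using rl_app_notin by metis+
        then show ?thesis using ru rv tr_eq_swap[OF uv(3), of "rl a p" q] by simp
      qed
    qed
  qed
qed

lemma rl_tr_eq: "(u, v) \<in> tr_eq I \<Longrightarrow> (rl a u, rl a v) \<in> tr_eq I"
proof (induction rule: tr_eq_induct)
  case refl then show ?case by simp
next
  case (step x y)
  from \<open>(x, y) \<in> tstep I \<or> (y, x) \<in> tstep I\<close> have "(rl a x, rl a y) \<in> tr_eq I"
  proof
    assume "(x, y) \<in> tstep I" then show ?thesis by (rule rl_tstep)
  next
    assume "(y, x) \<in> tstep I" from rl_tstep[OF this, of a] show ?thesis by (rule tr_eq_sym)
  qed
  with step.IH show ?case by (rule tr_eq_trans)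
qed

lemma tr_eq_cancel: "(u @ [a], v @ [a]) \<in> tr_eq I \<Longrightarrow> (u, v) \<in> tr_eq I"
proof -
  assume "(u @ [a], v @ [a]) \<in> tr_eq I"
  from rl_tr_eq[OF this, of a] show ?thesis by simp
qed

definition prj :: "'a \<Rightarrow> 'a \<Rightarrow> 'a list \<Rightarrow> 'a list" where
  "prj a b w = filter (\<lambda>x. x = a \<or> x = b) w"

lemma prj_tr_eq:
  assumes "sym I" "irrefl I" "(a, b) \<notin> I" "(u, v) \<in> tr_eq I"
  shows "prj a b u = prj a b v"
  using assms(4)
proof (rule tr_eq_invariant)
  fix x y assume "(x, y) \<in> tstep I"
  then obtain p q c d where xy: "x = p @ [c, d] @ q" "y = p @ [d, c] @ q" "(c, d) \<in> I"
    unfolding tstep_def by blast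
  have "c \<noteq> d" using xy(3) assms(2) by (auto simp: irrefl_def)
  have "(b, a) \<notin> I" using assms(1,3) by (meson symD)
  then have "\<not> ((c = a \<or> c = b) \<and> (d = a \<or> d = b))"
    using xy(3) assms(3) \<open>c \<noteq> d\<close> by blast
  then show "prj a b x = prj a b y"
    using xy by (auto simp: prj_def)
qed

lemma levi:
  assumes "sym I" "irrefl I" "(u @ [b], v @ [a]) \<in> tr_eq I" "a \<noteq> b"
  shows "(a, b) \<in> I \<and> (u, rl a u @ [a]) \<in> tr_eq I \<and> (v, rl a u @ [b]) \<in> tr_eq I"
proof -
  have ab: "(a, b) \<in> I"
  proof (rule ccontr)
    assume "(a, b) \<notin> I"
    have "prj a b (u @ [b]) = prj a b (v @ [a])"
      by (rule prj_tr_eq[OF assms(1,2) \<open>(a, b) \<notin> I\<close> assms(3)])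
    then have "last (prj a b (u @ [b])) = last (prj a b (v @ [a]))" by simp
    then show False using assms(4) by (simp add: prj_def)
  qed
  have v: "(rl a u @ [b], v) \<in> tr_eq I"
  proof -
    have "b \<noteq> a" using assms(4) by simp
    from rl_tr_eq[OF assms(3), of a] show ?thesis by (simp add: rl_snoc_other[OF \<open>b \<noteq> a\<close>])
  qed
  have "(u @ [b], rl a u @ [b] @ [a]) \<in> tr_eq I"
    using tr_eq_trans[OF assms(3) tr_eq_cong[OF tr_eq_sym[OF v] tr_eq_refl[of "[a]"]]] by simp
  moreover have "(rl a u @ [b, a], rl a u @ [a, b]) \<in> tr_eq I"
  proof -
    have "(b, a) \<in> I" using ab assms(1) by (meson symD)
    from tr_eq_swap[OF this, of "rl a u" "[]"] show ?thesis by simp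
  qed
  ultimately have "(u @ [b], (rl a u @ [a]) @ [b]) \<in> tr_eq I"
    by (simp add: tr_eq_trans)
  then have "(u, rl a u @ [a]) \<in> tr_eq I" by (rule tr_eq_cancel)
  then show ?thesis using ab tr_eq_sym[OF v] by blast
qed


lemma snoc_last:
  assumes "sym I" "irrefl I" "(u @ ws, v @ [a]) \<in> tr_eq I" "a \<notin> set ws"
  shows "\<exists>z. (u, z @ [a]) \<in> tr_eq I"
  using assms(3,4)
proof (induction ws arbitrary: v rule: rev_induct)
  case Nil then show ?case by auto
next
  case (snoc b ws)
  then have "a \<noteq> b" by simp
  from snoc.prems(1) have "((u @ ws) @ [b], v @ [a]) \<in> tr_eq I" by simp
  from levi[OF assms(1,2) this \<open>a \<noteq> b\<close>] have "(u @ ws, rl a (u @ ws) @ [a]) \<in> tr_eq I" by blast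
  moreover have "a \<notin> set ws" using snoc.prems(2) by simp
  ultimately show ?case by (rule snoc.IH)
qed

lemma mtf:
  assumes "distinct xs" "\<forall>x\<in>set xs. \<forall>y\<in>set xs. x \<noteq> y \<longrightarrow> (x, y) \<in> I" "x \<in> set xs"
  shows "(xs, x # remove1 x xs) \<in> tr_eq I"
  using assms
proof (induction xs)
  case Nil then show ?case by simp
next
  case (Cons y ys)
  show ?case
  proof (cases "y = x")
    case True then show ?thesis by simp
  next
    case False
    then have x: "x \<in> set ys" using Cons.prems by simp
    have IH: "(ys, x # remove1 x ys) \<in> tr_eq I"
      by (rule Cons.IH) (use Cons.prems x in auto)
    have yx: "(y, x) \<in> I" using Cons.prems(2) x False by auto
    have c1: "(y # ys, y # x # remove1 x ys) \<in> tr_eq I"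
      using tr_eq_app[OF IH, of "[y]" "[]"] by simp
    have c2: "(y # x # remove1 x ys, x # y # remove1 x ys) \<in> tr_eq I"
      using tr_eq_swap[OF yx, of "[]" "remove1 x ys"] by simp
    have "remove1 x (y # ys) = y # remove1 x ys" using False by simp
    then show ?thesis using tr_eq_trans[OF c1 c2] by simp
  qed
qed

lemma perm_tr_eq:
  assumes "distinct xs" "distinct ys" "set xs = set ys" "\<forall>x\<in>set xs. \<forall>y\<in>set xs. x \<noteq> y \<longrightarrow> (x, y) \<in> I"
  shows "(xs, ys) \<in> tr_eq I"
  using assms
proof (induction xs arbitrary: ys)
  case Nil then show ?case by simp
next
  case (Cons x xs)
  have xin: "x \<in> set ys" using Cons.prems(3) by auto
  have m: "(ys, x # remove1 x ys) \<in> tr_eq I"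
    by (rule mtf) (use Cons.prems xin in auto)
  have sr: "set (remove1 x ys) = set ys - {x}" using Cons.prems(2) by (simp add: set_remove1_eq)
  have "(xs, remove1 x ys) \<in> tr_eq I"
    by (rule Cons.IH) (use Cons.prems sr in auto)
  then have "(x # xs, x # remove1 x ys) \<in> tr_eq I" using tr_eq_app[of _ _ I "[x]" "[]"] by simp
  then show ?case using tr_eq_sym[OF m] by (rule tr_eq_trans)
qed


lemma in_trace: "v \<in> trace I u \<longleftrightarrow> (u, v) \<in> tr_eq I"
  by (simp add: trace_def)

lemma trace_eq_iff: "trace I u = trace I v \<longleftrightarrow> (u, v) \<in> tr_eq I"
proof
  assume "trace I u = trace I v"
  then have "v \<in> trace I u" by (simp add: in_trace)
  then show "(u, v) \<in> tr_eq I" by (simp add: in_trace)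
next
  assume uv: "(u, v) \<in> tr_eq I"
  show "trace I u = trace I v"
  proof (rule set_eqI)
    fix w
    show "w \<in> trace I u \<longleftrightarrow> w \<in> trace I v"
      unfolding in_trace using uv tr_eq_sym[OF uv] tr_eq_trans by metis
  qed
qed

definition rep :: "'a list set \<Rightarrow> 'a list" where "rep t = (SOME u. u \<in> t)"

lemma rep_trace: "(w, rep (trace I w)) \<in> tr_eq I"
proof -
  have "w \<in> trace I w" by (simp add: in_trace)
  then have "rep (trace I w) \<in> trace I w" unfolding rep_def by (rule someI)
  then show ?thesis by (simp add: in_trace)
qed

lemma trace_rep_trace[simp]: "trace I (rep (trace I w)) = trace I w"
  using rep_trace[of w I] trace_eq_iff tr_eq_sym by metis

lemma length_rep_trace[simp]: "length (rep (trace I w)) = length w"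
  using rep_trace[of w I] tr_eq_length by metis

lemma set_rep_trace[simp]: "set (rep (trace I w)) = set w"
  using rep_trace[of w I] tr_eq_set by metis

lemma tmult_rep: "tmult I x y = trace I (rep x @ rep y)"
  by (simp add: tmult_def rep_def)

lemma tmult_trace: "tmult I (trace I u) (trace I v) = trace I (u @ v)"
  unfolding tmult_rep trace_eq_iff
  by (rule tr_eq_cong; rule tr_eq_sym; rule rep_trace)

lemma trace_in_tmon: "set w \<subseteq> Sig \<Longrightarrow> trace I w \<in> tmon Sig I"
  by (auto simp: tmon_def)

lemma tmon_rep:
  assumes "t \<in> tmon Sig I"
  shows "trace I (rep t) = t" "set (rep t) \<subseteq> Sig"
  using assms by (auto simp: tmon_def)

lemma rep_tmon_tr_eq: "t \<in> tmon Sig I \<Longrightarrow> (rep t, w) \<in> tr_eq I \<longleftrightarrow> trace I w = t"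
  using tmon_rep(1)[of t Sig I] trace_eq_iff by metis

lemma free_mod_iff: "f \<in> free_mod Sig I J \<longleftrightarrow> finite (supp f) \<and> supp f \<subseteq> J \<times> tmon Sig I"
  by (auto simp: free_mod_def supp_def)

locale tm =
  fixes Sig :: "'a set" and I :: "('a \<times> 'a) set" and ix :: "'a \<Rightarrow> nat"
  assumes fin: "finite Sig" and IS: "I \<subseteq> Sig \<times> Sig" and symI: "sym I" and irr: "irrefl I"
    and inj: "inj_on ix Sig"
begin

definition clq :: "'a set \<Rightarrow> bool" where
  "clq C \<longleftrightarrow> C \<subseteq> Sig \<and> (\<forall>a\<in>C. \<forall>b\<in>C. a \<noteq> b \<longrightarrow> (a, b) \<in> I)"
definition enc :: "'a set \<Rightarrow> nat" where "enc C = set_encode (ix ` C)"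
definition dec :: "nat \<Rightarrow> 'a set" where "dec j = (SOME C. C \<subseteq> Sig \<and> enc C = j)"
definition JJ :: "nat \<Rightarrow> nat set" where "JJ k = enc ` {C. clq C \<and> card C = k}"
definition cells :: "nat \<Rightarrow> (nat \<times> 'a list set) set" where "cells k = JJ k \<times> tmon Sig I"

definition mx :: "'a list set \<Rightarrow> 'a \<Rightarrow> 'a list set" where "mx m x = trace I (rep m @ [x])"
definition dv :: "'a list set \<Rightarrow> 'a \<Rightarrow> 'a list set" where "dv m a = trace I (rl a (rep m))"
definition cw :: "'a set \<Rightarrow> 'a list" where "cw C = (SOME w. distinct w \<and> set w = C)"
definition top :: "'a set \<Rightarrow> 'a list set \<Rightarrow> 'a list set" where "top C m = trace I (rep m @ cw C)"
definition lastl :: "'a list set \<Rightarrow> 'a set" where "lastl t = {a. \<exists>w. (rep t, w @ [a]) \<in> tr_eq I}"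
definition ap :: "'a list set \<Rightarrow> 'a" where "ap t = (SOME a. a \<in> lastl t)"
definition sg :: "'a \<Rightarrow> 'a set \<Rightarrow> int" where "sg x C = (-1) ^ card {y\<in>C. ix y < ix x}"
definition lev :: "nat \<times> 'a list set \<Rightarrow> nat" where "lev p = length (rep (snd p))"

lemma clq_fin: "clq C \<Longrightarrow> finite C"
  using fin by (auto simp: clq_def intro: finite_subset)

lemma clq_sub: "clq C \<Longrightarrow> C' \<subseteq> C \<Longrightarrow> clq C'"
  by (auto simp: clq_def)

lemma enc_eq:
  assumes "C \<subseteq> Sig" "C' \<subseteq> Sig"
  shows "enc C = enc C' \<longleftrightarrow> C = C'"
proof -
  have f: "finite (ix ` C)" "finite (ix ` C')" using assms fin by (auto intro: finite_subset)
  have "enc C = enc C' \<longleftrightarrow> ix ` C = ix ` C'" unfolding enc_def using f by (simp add: set_encode_eq)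
  also have "\<dots> \<longleftrightarrow> C = C'" using assms inj by (simp add: inj_on_image_eq_iff)
  finally show ?thesis .
qed

lemma dec_enc[simp]: "C \<subseteq> Sig \<Longrightarrow> dec (enc C) = C"
proof -
  assume C: "C \<subseteq> Sig"
  have "dec (enc C) \<subseteq> Sig \<and> enc (dec (enc C)) = enc C"
    unfolding dec_def by (rule someI[of _ C]) (use C in simp)
  then show ?thesis using enc_eq C by blast
qed

lemma cw: "finite C \<Longrightarrow> distinct (cw C) \<and> set (cw C) = C"
  unfolding cw_def by (metis (mono_tags, lifting) finite_distinct_list someI_ex)

lemma rep_mx: "(rep m @ [x], rep (mx m x)) \<in> tr_eq I"
  unfolding mx_def by (rule rep_trace)

lemma mx_in: "m \<in> tmon Sig I \<Longrightarrow> x \<in> Sig \<Longrightarrow> mx m x \<in> tmon Sig I"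
  unfolding mx_def by (rule trace_in_tmon) (use tmon_rep(2) in auto)

lemma dv_in: "m \<in> tmon Sig I \<Longrightarrow> dv m a \<in> tmon Sig I"
  unfolding dv_def rl_def
  by (rule trace_in_tmon) (use tmon_rep(2)[of m Sig I] set_remove1_subset[of a "rev (rep m)"] in auto)

lemma lev_mx: "length (rep (mx m x)) = length (rep m) + 1"
  by (simp add: mx_def)

lemma lev_dv: "a \<in> set (rep m) \<Longrightarrow> length (rep (dv m a)) = length (rep m) - 1"
  by (simp add: dv_def length_rl)

lemma mx_comm:
  assumes "(x, y) \<in> I"
  shows "mx (mx m x) y = mx (mx m y) x"
proof -
  have "(rep (mx m x) @ [y], rep m @ [x, y]) \<in> tr_eq I"
    using tr_eq_cong[OF tr_eq_sym[OF rep_mx] tr_eq_refl[of "[y]"]] by simp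
  moreover have "(rep m @ [x, y], rep m @ [y, x]) \<in> tr_eq I"
    using tr_eq_swap[OF assms, of "rep m" "[]"] by simp
  moreover have "(rep m @ [y, x], rep (mx m y) @ [x]) \<in> tr_eq I"
    using tr_eq_cong[OF rep_mx tr_eq_refl[of "[x]"]] by simp
  ultimately show ?thesis unfolding mx_def[of "mx m x"] mx_def[of "mx m y"] trace_eq_iff
    by (meson tr_eq_trans)
qed

lemma tmult_mx: "tmult I m' (mx m x) = mx (tmult I m' m) x"
proof -
  have "(rep m' @ rep (mx m x), rep m' @ rep m @ [x]) \<in> tr_eq I"
    using tr_eq_app[OF tr_eq_sym[OF rep_mx], where p = "rep m'" and q = "[]"] by simp
  moreover have "(rep m' @ rep m @ [x], rep (tmult I m' m) @ [x]) \<in> tr_eq I"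
  proof -
    have r: "(rep m' @ rep m, rep (tmult I m' m)) \<in> tr_eq I" unfolding tmult_rep by (rule rep_trace)
    show ?thesis using tr_eq_cong[OF r tr_eq_refl] by simp
  qed
  ultimately show ?thesis unfolding tmult_rep[where x=m' and y="mx m x"] mx_def[of "tmult I m' m"] trace_eq_iff
    by (rule tr_eq_trans)
qed

lemma mx_dv:
  assumes "m \<in> tmon Sig I" "(rep m, w @ [a]) \<in> tr_eq I"
  shows "mx (dv m a) a = m"
proof -
  have "(rl a (rep m), w) \<in> tr_eq I" using rl_tr_eq[OF assms(2), of a] by simp
  have "(rep (dv m a) @ [a], rl a (rep m) @ [a]) \<in> tr_eq I"
    unfolding dv_def by (rule tr_eq_cong[OF tr_eq_sym[OF rep_trace] tr_eq_refl])
  moreover have "(rl a (rep m) @ [a], w @ [a]) \<in> tr_eq I"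
    by (rule tr_eq_cong[OF \<open>(rl a (rep m), w) \<in> tr_eq I\<close> tr_eq_refl])
  ultimately have "(rep m, rep (dv m a) @ [a]) \<in> tr_eq I"
    using assms(2) by (meson tr_eq_trans tr_eq_sym)
  then show ?thesis unfolding mx_def using rep_tmon_tr_eq[OF assms(1)] by simp
qed

lemma dv_mx_same:
  assumes "m \<in> tmon Sig I"
  shows "dv (mx m a) a = m"
proof -
  have "(rl a (rep (mx m a)), rl a (rep m @ [a])) \<in> tr_eq I"
    by (rule rl_tr_eq[OF tr_eq_sym[OF rep_mx]])
  then show ?thesis unfolding dv_def[of "mx m a"] using rep_tmon_tr_eq[OF assms]
    by (metis rl_snoc_same tr_eq_sym)
qed

lemma dv_mx_other:
  assumes "y \<noteq> a"
  shows "dv (mx m y) a = mx (dv m a) y"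
proof -
  have "(rl a (rep (mx m y)), rl a (rep m @ [y])) \<in> tr_eq I"
    by (rule rl_tr_eq[OF tr_eq_sym[OF rep_mx]])
  then have 1: "(rl a (rep (mx m y)), rl a (rep m) @ [y]) \<in> tr_eq I"
    using rl_snoc_other[OF assms] by simp
  have 2: "(rep (dv m a) @ [y], rl a (rep m) @ [y]) \<in> tr_eq I"
    unfolding dv_def by (rule tr_eq_cong[OF tr_eq_sym[OF rep_trace] tr_eq_refl])
  show ?thesis unfolding dv_def[of "mx m y"] mx_def[of "dv m a"] trace_eq_iff
    using 1 2 by (meson tr_eq_trans tr_eq_sym)
qed

lemma clq_pairs: "clq C \<Longrightarrow> \<forall>x\<in>set w. \<forall>y\<in>set w. x \<noteq> y \<longrightarrow> (x, y) \<in> I \<Longrightarrow> True"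
  by simp

lemma perm_clq:
  assumes "clq C" "distinct w1" "distinct w2" "set w1 = C" "set w2 = C"
  shows "(w1, w2) \<in> tr_eq I"
  by (rule perm_tr_eq) (use assms in \<open>auto simp: clq_def\<close>)

lemma top_face:
  assumes "clq C" "x \<in> C"
  shows "top (C - {x}) (mx m x) = top C m"
proof -
  have fC: "finite C" using assms clq_fin by blast
  have cw1: "distinct (cw (C - {x}))" "set (cw (C - {x})) = C - {x}" using cw[of "C - {x}"] fC by auto
  have cw2: "distinct (cw C)" "set (cw C) = C" using cw[of C] fC by auto
  have p: "(x # cw (C - {x}), cw C) \<in> tr_eq I"
    by (rule perm_clq[OF assms(1)]) (use cw1 cw2 assms(2) in auto)
  have "(rep (mx m x) @ cw (C - {x}), rep m @ [x] @ cw (C - {x})) \<in> tr_eq I"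
    using tr_eq_cong[OF tr_eq_sym[OF rep_mx] tr_eq_refl] by simp
  moreover have "(rep m @ [x] @ cw (C - {x}), rep m @ cw C) \<in> tr_eq I"
    using tr_eq_app[OF p, of "rep m" "[]"] by simp
  ultimately show ?thesis unfolding top_def trace_eq_iff by (rule tr_eq_trans)
qed

lemma top_cone:
  assumes "clq (insert a C)" "a \<notin> C" "(rep m, w @ [a]) \<in> tr_eq I"
  shows "top (insert a C) (dv m a) = top C m"
proof -
  have fC: "finite C" using clq_fin[OF assms(1)] by simp
  have cw1: "distinct (cw (insert a C))" "set (cw (insert a C)) = insert a C" using cw fC by auto
  have cw2: "distinct (cw C)" "set (cw C) = C" using cw[of C] fC by auto
  have p: "(cw (insert a C), a # cw C) \<in> tr_eq I"
    by (rule perm_clq[OF assms(1)]) (use cw1 cw2 assms(2) in auto)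
  have r: "(rep (dv m a), w) \<in> tr_eq I"
    using tr_eq_trans[OF tr_eq_sym[OF rep_trace] rl_tr_eq[OF assms(3), of a]] unfolding dv_def by simp
  have "(rep (dv m a) @ cw (insert a C), w @ (a # cw C)) \<in> tr_eq I"
    by (rule tr_eq_cong[OF r p])
  moreover have "(w @ (a # cw C), rep m @ cw C) \<in> tr_eq I"
    using tr_eq_cong[OF tr_eq_sym[OF assms(3)] tr_eq_refl[of "cw C"]] by simp
  ultimately show ?thesis unfolding top_def trace_eq_iff by (rule tr_eq_trans)
qed

lemma length_top: "finite C \<Longrightarrow> length (rep (top C m)) = length (rep m) + card C"
  using cw[of C] by (simp add: top_def) (metis distinct_card)

lemma cone_facts:
  assumes "clq C" "m \<in> tmon Sig I" "rep (top C m) \<noteq> []"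
  shows "ap (top C m) \<in> Sig"
    and "ap (top C m) \<notin> C \<Longrightarrow> clq (insert (ap (top C m)) C)"
    and "ap (top C m) \<notin> C \<Longrightarrow> \<exists>w. (rep m, w @ [ap (top C m)]) \<in> tr_eq I"
proof -
  let ?t = "top C m"
  let ?a = "ap ?t"
  have fC: "finite C" using assms clq_fin by blast
  have cw2: "distinct (cw C)" "set (cw C) = C" using cw[of C] fC by auto
  have "last (rep ?t) \<in> lastl ?t"
    unfolding lastl_def using assms(3) by (intro CollectI exI[of _ "butlast (rep ?t)"]) simp
  then have "?a \<in> lastl ?t" unfolding ap_def by (rule someI)
  then obtain w where w: "(rep ?t, w @ [?a]) \<in> tr_eq I" unfolding lastl_def by blast
  have "(rep m @ cw C, rep ?t) \<in> tr_eq I" unfolding top_def by (rule rep_trace)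
  from tr_eq_trans[OF this w] have mw: "(rep m @ cw C, w @ [?a]) \<in> tr_eq I" .
  have "set (rep m @ cw C) \<subseteq> Sig" using tmon_rep(2)[OF assms(2)] cw2 assms(1) by (auto simp: clq_def)
  then show "?a \<in> Sig" using tr_eq_set[OF mw] by auto
  show "ap (top C m) \<notin> C \<Longrightarrow> \<exists>w. (rep m, w @ [ap (top C m)]) \<in> tr_eq I"
    by (rule snoc_last[OF symI irr mw]) (use cw2 in simp)
  assume aC: "?a \<notin> C"
  have "\<forall>c\<in>C. (?a, c) \<in> I"
  proof
    fix c assume c: "c \<in> C"
    have p: "(cw C, remove1 c (cw C) @ [c]) \<in> tr_eq I"
      by (rule perm_clq[OF assms(1)]) (use cw2 c in \<open>auto simp: set_remove1_eq\<close>)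
    have "((rep m @ remove1 c (cw C)) @ [c], w @ [?a]) \<in> tr_eq I"
      using tr_eq_trans[OF tr_eq_app[OF tr_eq_sym[OF p], of "rep m" "[]", simplified] mw] by simp
    moreover have "?a \<noteq> c" using aC c by blast
    ultimately show "(?a, c) \<in> I" using levi[OF symI irr] by blast
  qed
  then show "clq (insert ?a C)" using assms(1) \<open>?a \<in> Sig\<close> symI
    by (auto simp: clq_def dest: symD)
qed

lemma sg_sq[simp]: "sg x C * sg x C = 1"
  by (simp add: sg_def flip: power_add mult_2)

lemma sg_swap_lt:
  assumes "finite C" "x \<in> C" "y \<in> C" "ix x < ix y"
  shows "sg x C * sg y (C - {x}) = - (sg y C * sg x (C - {y}))"
proof -
  let ?A = "{z\<in>C. ix z < ix y}"
  have fA: "finite ?A" using assms by simp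
  have xA: "x \<in> ?A" using assms by simp
  have "{z\<in>C - {x}. ix z < ix y} = ?A - {x}" by auto
  then have c1: "card {z\<in>C - {x}. ix z < ix y} = card ?A - 1" using fA xA by simp
  have pos: "card ?A \<ge> 1" using fA xA by (metis One_nat_def Suc_leI card_gt_0_iff empty_iff)
  have "{z\<in>C - {y}. ix z < ix x} = {z\<in>C. ix z < ix x}" using assms(4) by auto
  then have s2: "sg x (C - {y}) = sg x C" by (simp add: sg_def)
  have s1: "sg y C = - sg y (C - {x})"
  proof -
    obtain n where n: "card ?A = Suc n" using pos by (metis Suc_le_D One_nat_def)
    show ?thesis unfolding sg_def c1 n by simp
  qed
  show ?thesis unfolding s2 s1 by simp
qed

lemma sg_swap:
  assumes "C \<subseteq> Sig" "x \<in> C" "y \<in> C" "x \<noteq> y"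
  shows "sg x C * sg y (C - {x}) = - (sg y C * sg x (C - {y}))"
proof -
  have fC: "finite C" using assms fin by (auto intro: finite_subset)
  have "ix x \<noteq> ix y" using assms inj by (meson inj_onD subsetD)
  then consider "ix x < ix y" | "ix y < ix x" by linarith
  then show ?thesis
  proof cases
    case 1 then show ?thesis using sg_swap_lt fC assms by blast
  next
    case 2
    from sg_swap_lt[OF fC assms(3) assms(2) 2] show ?thesis by linarith
  qed
qed

end


context tm begin

definition Dg :: "nat \<times> 'a list set \<Rightarrow> nat \<times> 'a list set \<Rightarrow> int" where
  "Dg p = (\<lambda>q. \<Sum>x\<in>dec (fst p). sg x (dec (fst p)) * dl (enc (dec (fst p) - {x}), mx (snd p) x) q)"
definition Dl :: "nat \<times> 'a list set \<Rightarrow> nat \<times> 'a list set \<Rightarrow> int" where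
  "Dl p = (\<lambda>q. \<Sum>x\<in>dec (fst p). sg x (dec (fst p)) * dl (enc (dec (fst p) - {x}), snd p) q)"
definition DD :: "nat \<times> 'a list set \<Rightarrow> nat \<times> 'a list set \<Rightarrow> int" where
  "DD p = (\<lambda>q. Dg p q - Dl p q)"
definition Cn :: "nat \<times> 'a list set \<Rightarrow> nat \<times> 'a list set \<Rightarrow> int" where
  "Cn p = (let C = dec (fst p); m = snd p; a = ap (top C m) in
     if rep (top C m) = [] \<or> a \<in> C then (\<lambda>q. 0)
     else (\<lambda>q. sg a (insert a C) * dl (enc (insert a C), dv m a) q))"
definition Am :: "'a list set \<Rightarrow> nat \<times> 'a list set \<Rightarrow> nat \<times> 'a list set \<Rightarrow> int" where
  "Am m' p = dl (fst p, tmult I m' (snd p))"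

lemma Dg_enc: "C \<subseteq> Sig \<Longrightarrow> Dg (enc C, m) = (\<lambda>q. \<Sum>x\<in>C. sg x C * dl (enc (C - {x}), mx m x) q)"
  by (simp add: Dg_def)
lemma Dl_enc: "C \<subseteq> Sig \<Longrightarrow> Dl (enc C, m) = (\<lambda>q. \<Sum>x\<in>C. sg x C * dl (enc (C - {x}), m) q)"
  by (simp add: Dl_def)
lemma DD_enc: "C \<subseteq> Sig \<Longrightarrow> DD (enc C, m) q =
    (\<Sum>x\<in>C. sg x C * (dl (enc (C - {x}), mx m x) q - dl (enc (C - {x}), m) q))"
  by (simp add: DD_def Dg_enc Dl_enc right_diff_distrib sum_subtractf)

lemma Cn_enc: "C \<subseteq> Sig \<Longrightarrow> Cn (enc C, m) = (let a = ap (top C m) in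
     if rep (top C m) = [] \<or> a \<in> C then (\<lambda>q. 0)
     else (\<lambda>q. sg a (insert a C) * dl (enc (insert a C), dv m a) q))"
  by (simp add: Cn_def)

lemma cellsE:
  assumes "p \<in> cells k"
  obtains C m where "p = (enc C, m)" "clq C" "card C = k" "m \<in> tmon Sig I"
  using assms by (auto simp: cells_def JJ_def)

lemma cell_in: "clq C \<Longrightarrow> card C = k \<Longrightarrow> m \<in> tmon Sig I \<Longrightarrow> (enc C, m) \<in> cells k"
  by (auto simp: cells_def JJ_def)

lemma clq_Sig: "clq C \<Longrightarrow> C \<subseteq> Sig"
  by (simp add: clq_def)

lemma face_cell:
  assumes "clq C" "card C = k" "x \<in> C" "m \<in> tmon Sig I"
  shows "(enc (C - {x}), m) \<in> cells (k - 1)"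
  using assms clq_fin[OF assms(1)] by (intro cell_in) (auto intro: clq_sub)

lemma supp_Dg:
  assumes "p \<in> cells k"
  shows "finite (supp (Dg p))" "supp (Dg p) \<subseteq> cells (k - 1)"
proof -
  obtain C m where p: "p = (enc C, m)" "clq C" "card C = k" "m \<in> tmon Sig I"
    using assms(1) by (rule cellsE)
  have fC: "finite C" using p clq_fin by blast
  show "finite (supp (Dg p))" unfolding p(1) Dg_enc[OF clq_Sig[OF p(2)]]
    using fC by (rule finite_supp_sum_dl)
  have "supp (Dg p) \<subseteq> (\<lambda>x. (enc (C - {x}), mx m x)) ` C"
    unfolding p(1) Dg_enc[OF clq_Sig[OF p(2)]] by (rule supp_sum_dl)
  also have "\<dots> \<subseteq> cells (k - 1)"
  proof (rule image_subsetI)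
    fix x assume x: "x \<in> C"
    then have "x \<in> Sig" using clq_Sig[OF p(2)] by blast
    then show "(enc (C - {x}), mx m x) \<in> cells (k - 1)"
      using face_cell[OF p(2,3) x mx_in[OF p(4)]] by simp
  qed
  finally show "supp (Dg p) \<subseteq> cells (k - 1)" .
qed

lemma supp_Dl:
  assumes "p \<in> cells k"
  shows "finite (supp (Dl p))" "supp (Dl p) \<subseteq> cells (k - 1)"
proof -
  obtain C m where p: "p = (enc C, m)" "clq C" "card C = k" "m \<in> tmon Sig I"
    using assms(1) by (rule cellsE)
  have fC: "finite C" using p clq_fin by blast
  show "finite (supp (Dl p))" unfolding p(1) Dl_enc[OF clq_Sig[OF p(2)]]
    using fC by (rule finite_supp_sum_dl)
  have "supp (Dl p) \<subseteq> (\<lambda>x. (enc (C - {x}), m)) ` C"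
    unfolding p(1) Dl_enc[OF clq_Sig[OF p(2)]] by (rule supp_sum_dl)
  also have "\<dots> \<subseteq> cells (k - 1)"
    using face_cell[OF p(2,3) _ p(4)] by blast
  finally show "supp (Dl p) \<subseteq> cells (k - 1)" .
qed

lemma supp_DD:
  assumes "p \<in> cells k"
  shows "finite (supp (DD p))" "supp (DD p) \<subseteq> cells (k - 1)"
  using supp_diff[of "Dg p" "Dl p"] supp_Dg[OF assms] supp_Dl[OF assms]
  unfolding DD_def[of p, symmetric] by (auto intro: finite_subset)

lemma supp_Cn:
  assumes "p \<in> cells k"
  shows "finite (supp (Cn p))" "supp (Cn p) \<subseteq> cells (Suc k)"
proof -
  obtain C m where p: "p = (enc C, m)" "clq C" "card C = k" "m \<in> tmon Sig I"
    using assms(1) by (rule cellsE)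
  let ?a = "ap (top C m)"
  show "finite (supp (Cn p))"
    unfolding p(1) Cn_enc[OF clq_Sig[OF p(2)]] Let_def
    by (auto simp: supp_def dl_def)
  show "supp (Cn p) \<subseteq> cells (Suc k)"
  proof (cases "rep (top C m) = [] \<or> ?a \<in> C")
    case True then show ?thesis unfolding p(1) Cn_enc[OF clq_Sig[OF p(2)]] Let_def by simp
  next
    case False
    then have ne: "rep (top C m) \<noteq> []" and aC: "?a \<notin> C" by auto
    have "clq (insert ?a C)" using cone_facts(2)[OF p(2,4) ne aC] .
    moreover have "card (insert ?a C) = Suc k" using aC p(3) clq_fin[OF p(2)] by simp
    ultimately have "(enc (insert ?a C), dv m ?a) \<in> cells (Suc k)"
      using dv_in[OF p(4)] by (rule cell_in)
    then show ?thesis unfolding p(1) Cn_enc[OF clq_Sig[OF p(2)]] Let_def using False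
      by (auto simp: supp_def dl_def split: if_splits)
  qed
qed

lemma lev_Dg:
  assumes "p \<in> cells k" "q \<in> supp (Dg p)"
  shows "lev q = Suc (lev p)"
proof -
  obtain C m where p: "p = (enc C, m)" "clq C" "card C = k" "m \<in> tmon Sig I"
    using assms(1) by (rule cellsE)
  have "q \<in> supp (\<lambda>q. \<Sum>x\<in>C. sg x C * dl (enc (C - {x}), mx m x) q)"
    using assms(2) unfolding p(1) Dg_enc[OF clq_Sig[OF p(2)]] .
  then have "q \<in> (\<lambda>x. (enc (C - {x}), mx m x)) ` C"
    by (rule subsetD[OF supp_sum_dl])
  then show ?thesis using p(1) by (auto simp: lev_def lev_mx)
qed

lemma lev_Dl:
  assumes "p \<in> cells k" "q \<in> supp (Dl p)"
  shows "lev q = lev p"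
proof -
  obtain C m where p: "p = (enc C, m)" "clq C" "card C = k" "m \<in> tmon Sig I"
    using assms(1) by (rule cellsE)
  have "q \<in> supp (\<lambda>q. \<Sum>x\<in>C. sg x C * dl (enc (C - {x}), m) q)"
    using assms(2) unfolding p(1) Dl_enc[OF clq_Sig[OF p(2)]] .
  then have "q \<in> (\<lambda>x. (enc (C - {x}), m)) ` C"
    by (rule subsetD[OF supp_sum_dl])
  then show ?thesis using p(1) by (auto simp: lev_def)
qed

lemma lev_Cn:
  assumes "p \<in> cells k" "q \<in> supp (Cn p)"
  shows "Suc (lev q) = lev p"
proof -
  obtain C m where p: "p = (enc C, m)" "clq C" "card C = k" "m \<in> tmon Sig I"
    using assms(1) by (rule cellsE)
  let ?a = "ap (top C m)"
  have False_case: "\<not> (rep (top C m) = [] \<or> ?a \<in> C)"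
  proof
    assume "rep (top C m) = [] \<or> ?a \<in> C"
    then have "Cn p = (\<lambda>q. 0)" unfolding p(1) Cn_enc[OF clq_Sig[OF p(2)]] Let_def by simp
    then show False using assms(2) by (simp add: supp_def)
  qed
  then have ne: "rep (top C m) \<noteq> []" and aC: "?a \<notin> C" by auto
  obtain w where w: "(rep m, w @ [?a]) \<in> tr_eq I" using cone_facts(3)[OF p(2,4) ne aC] by blast
  have ain: "?a \<in> set (rep m)" using tr_eq_set[OF w] by simp
  have q: "q = (enc (insert ?a C), dv m ?a)"
    using assms(2) False_case unfolding p(1) Cn_enc[OF clq_Sig[OF p(2)]] Let_def
    by (auto simp: supp_def dl_def split: if_splits)
  have "length (rep m) \<noteq> 0" using ain by auto
  then show ?thesis using q p(1) lev_dv[OF ain] by (simp add: lev_def)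
qed

lemma sg_cases: "sg x C = 1 \<or> sg x C = -1"
  by (simp add: sg_def minus_one_power_iff)

lemma sign_alg:
  fixes A B c e :: int
  assumes "A = 1 \<or> A = -1" "B = 1 \<or> B = -1" "c = 1 \<or> c = -1" "e = 1 \<or> e = -1"
    "A * c = - (B * e)"
  shows "A * B + c * e = 0"
  using assms by auto

lemma cone_id:
  assumes "p \<in> cells k" "rep (top (dec (fst p)) (snd p)) \<noteq> []"
  shows "(\<lambda>q. lin Dg (Cn p) q + lin Cn (Dg p) q) = dl p"
proof -
  obtain C m where p: "p = (enc C, m)" "clq C" "card C = k" "m \<in> tmon Sig I"
    using assms(1) by (rule cellsE)
  have CS: "C \<subseteq> Sig" using p(2) by (rule clq_Sig)
  have fC: "finite C" using p(2) by (rule clq_fin)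
  let ?t = "top C m"
  let ?a = "ap ?t"
  have ne: "rep ?t \<noteq> []" using assms(2) p(1) CS by simp
  have faceCn: "Cn (enc (C - {x}), mx m x) = (if ?a \<in> C - {x} then (\<lambda>q. 0)
      else (\<lambda>q. sg ?a (insert ?a (C - {x})) * dl (enc (insert ?a (C - {x})), dv (mx m x) ?a) q))"
    if "x \<in> C" for x
  proof -
    have "top (C - {x}) (mx m x) = ?t" using top_face[OF p(2) that] .
    moreover have "C - {x} \<subseteq> Sig" using CS by blast
    ultimately show ?thesis using ne by (simp add: Cn_enc Let_def)
  qed
  have linCnDg: "lin Cn (Dg p) = (\<lambda>q. \<Sum>x\<in>C. sg x C * Cn (enc (C - {x}), mx m x) q)"
    unfolding p(1) Dg_enc[OF CS] using fC by (rule lin_sum_dl)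
  show ?thesis
  proof (cases "?a \<in> C")
    case True
    have Cnp: "Cn p = (\<lambda>q. 0)" unfolding p(1) Cn_enc[OF CS] Let_def using True by simp
    show ?thesis
    proof
      fix q
      have "lin Cn (Dg p) q = (\<Sum>x\<in>C. if x = ?a then sg ?a C * (sg ?a (insert ?a (C - {?a})) *
          dl (enc (insert ?a (C - {?a})), dv (mx m ?a) ?a) q) else 0)"
        unfolding linCnDg
      proof (rule sum.cong[OF refl])
        fix x assume x: "x \<in> C"
        show "sg x C * Cn (enc (C - {x}), mx m x) q = (if x = ?a then sg ?a C * (sg ?a (insert ?a (C - {?a})) *
          dl (enc (insert ?a (C - {?a})), dv (mx m ?a) ?a) q) else 0)"
          using faceCn[OF x] True by auto
      qed
      also have "\<dots> = sg ?a C * (sg ?a C * dl p q)"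
        using True fC p(1) dv_mx_same[OF p(4)] by (simp add: insert_absorb)
      also have "\<dots> = dl p q" by (simp add: mult.assoc[symmetric])
      finally show "lin Dg (Cn p) q + lin Cn (Dg p) q = dl p q" using Cnp by simp
    qed
  next
    case False
    let ?D = "insert ?a C"
    obtain w where w: "(rep m, w @ [?a]) \<in> tr_eq I" using cone_facts(3)[OF p(2,4) ne False] by blast
    have clD: "clq ?D" using cone_facts(2)[OF p(2,4) ne False] .
    have DS: "?D \<subseteq> Sig" using clD by (rule clq_Sig)
    have Cnp: "Cn p = (\<lambda>q. sg ?a ?D * dl (enc ?D, dv m ?a) q)"
      unfolding p(1) Cn_enc[OF CS] Let_def using False ne by simp
    show ?thesis
    proof
      fix q
      have "lin Dg (Cn p) q = sg ?a ?D * Dg (enc ?D, dv m ?a) q"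
        unfolding Cnp lin_scaled_dl ..
      also have "\<dots> = sg ?a ?D * (sg ?a ?D * dl (enc C, m) q +
          (\<Sum>y\<in>C. sg y ?D * dl (enc (?D - {y}), mx (dv m ?a) y) q))"
        unfolding Dg_enc[OF DS] using False fC mx_dv[OF p(4) w] by (simp add: sum.insert)
      also have "\<dots> = dl p q + (\<Sum>y\<in>C. sg ?a ?D * sg y ?D * dl (enc (?D - {y}), mx (dv m ?a) y) q)"
        using p(1) by (simp add: distrib_left sum_distrib_left mult.assoc[symmetric])
      finally have 1: "lin Dg (Cn p) q = dl p q +
          (\<Sum>y\<in>C. sg ?a ?D * sg y ?D * dl (enc (?D - {y}), mx (dv m ?a) y) q)" .
      have 2: "lin Cn (Dg p) q = (\<Sum>y\<in>C. sg y C * sg ?a (?D - {y}) * dl (enc (?D - {y}), mx (dv m ?a) y) q)"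
        unfolding linCnDg
      proof (rule sum.cong[OF refl])
        fix y assume y: "y \<in> C"
        have ya: "y \<noteq> ?a" using y False by blast
        have "insert ?a (C - {y}) = ?D - {y}" using ya by blast
        then show "sg y C * Cn (enc (C - {y}), mx m y) q =
            sg y C * sg ?a (?D - {y}) * dl (enc (?D - {y}), mx (dv m ?a) y) q"
          using faceCn[OF y] False dv_mx_other[OF ya] by simp
      qed
      have 3: "sg ?a ?D * sg y ?D + sg y C * sg ?a (?D - {y}) = 0" if y: "y \<in> C" for y
      proof (rule sign_alg[OF sg_cases sg_cases sg_cases sg_cases])
        have ya: "y \<noteq> ?a" using y False by blast
        have "sg ?a ?D * sg y (?D - {?a}) = - (sg y ?D * sg ?a (?D - {y}))"
          by (rule sg_swap[OF DS]) (use y ya in auto)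
        moreover have "?D - {?a} = C" using False by simp
        ultimately show "sg ?a ?D * sg y C = - (sg y ?D * sg ?a (?D - {y}))" by simp
      qed
      have "lin Dg (Cn p) q + lin Cn (Dg p) q = dl p q +
          (\<Sum>y\<in>C. (sg ?a ?D * sg y ?D + sg y C * sg ?a (?D - {y})) * dl (enc (?D - {y}), mx (dv m ?a) y) q)"
        unfolding 1 2 by (simp add: sum.distrib distrib_right)
      also have "\<dots> = dl p q" using 3 by simp
      finally show "lin Dg (Cn p) q + lin Cn (Dg p) q = dl p q" .
    qed
  qed
qed

end


lemma pair_sum_zero:
  fixes F :: "'b \<Rightarrow> 'b \<Rightarrow> int"
  assumes "finite C" "\<And>x y. x \<in> C \<Longrightarrow> y \<in> C \<Longrightarrow> x \<noteq> y \<Longrightarrow> F y x = - F x y"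
  shows "(\<Sum>x\<in>C. \<Sum>y\<in>C - {x}. F x y) = 0"
proof -
  let ?G = "\<lambda>x y. if y \<noteq> x then F x y else 0"
  have e: "(\<Sum>x\<in>C. \<Sum>y\<in>C - {x}. F x y) = (\<Sum>x\<in>C. \<Sum>y\<in>C. ?G x y)"
  proof (rule sum.cong[OF refl])
    fix x assume "x \<in> C"
    show "(\<Sum>y\<in>C - {x}. F x y) = (\<Sum>y\<in>C. ?G x y)"
    proof -
      have "C \<inter> {y. y \<noteq> x} = C - {x}" by blast
      then show ?thesis using assms(1) by (simp add: sum.If_cases)
    qed
  qed
  have "(\<Sum>x\<in>C. \<Sum>y\<in>C. ?G x y) = (\<Sum>y\<in>C. \<Sum>x\<in>C. ?G x y)" by (rule sum.swap)
  also have "\<dots> = (\<Sum>y\<in>C. \<Sum>x\<in>C. - ?G y x)"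
  proof (intro sum.cong refl)
    fix y x assume yx: "y \<in> C" "x \<in> C"
    show "?G x y = - ?G y x"
    proof (cases "x = y")
      case True then show ?thesis by simp
    next
      case False
      have "F x y = - F y x" using assms(2)[OF yx False[symmetric]] .
      then show ?thesis using False by simp
    qed
  qed
  also have "\<dots> = - (\<Sum>y\<in>C. \<Sum>x\<in>C. ?G y x)" by (simp add: sum_negf)
  finally show ?thesis using e by linarith
qed

context tm begin

lemma DD_DD:
  assumes "p \<in> cells k"
  shows "lin DD (DD p) = (\<lambda>q. 0)"
proof
  fix q
  obtain C m where p: "p = (enc C, m)" "clq C" "card C = k" "m \<in> tmon Sig I"
    using assms by (rule cellsE)
  have CS: "C \<subseteq> Sig" using p(2) by (rule clq_Sig)
  have fC: "finite C" using p(2) by (rule clq_fin)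
  have "lin DD (DD p) q = lin DD (Dg p) q - lin DD (Dl p) q"
    unfolding DD_def[of p] using lin_diff[OF supp_Dg(1)[OF assms] supp_Dl(1)[OF assms]] by metis
  also have "\<dots> = (\<Sum>x\<in>C. sg x C * DD (enc (C - {x}), mx m x) q) - (\<Sum>x\<in>C. sg x C * DD (enc (C - {x}), m) q)"
    unfolding p(1) Dg_enc[OF CS] Dl_enc[OF CS] lin_sum_dl[OF fC] ..
  also have "\<dots> = (\<Sum>x\<in>C. \<Sum>y\<in>C - {x}. sg x C * sg y (C - {x}) *
      (dl (enc (C - {x} - {y}), mx (mx m x) y) q - dl (enc (C - {x} - {y}), mx m x) q
       - dl (enc (C - {x} - {y}), mx m y) q + dl (enc (C - {x} - {y}), m) q))"
  proof -
    have "sg x C * DD (enc (C - {x}), mx m x) q - sg x C * DD (enc (C - {x}), m) q =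
      (\<Sum>y\<in>C - {x}. sg x C * sg y (C - {x}) *
      (dl (enc (C - {x} - {y}), mx (mx m x) y) q - dl (enc (C - {x} - {y}), mx m x) q
       - dl (enc (C - {x} - {y}), mx m y) q + dl (enc (C - {x} - {y}), m) q))" for x
    proof -
      have "C - {x} \<subseteq> Sig" using CS by blast
      then show ?thesis
        by (simp add: DD_enc sum_distrib_left sum_subtractf[symmetric] algebra_simps)
    qed
    then show ?thesis by (simp add: sum_subtractf[symmetric])
  qed
  also have "\<dots> = 0"
  proof (rule pair_sum_zero[OF fC])
    fix x y assume xy: "x \<in> C" "y \<in> C" "x \<noteq> y"
    have "(x, y) \<in> I" using p(2) xy by (auto simp: clq_def)
    then have c: "mx (mx m x) y = mx (mx m y) x" by (rule mx_comm)
    have s: "sg x C * sg y (C - {x}) = - (sg y C * sg x (C - {y}))"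
      by (rule sg_swap[OF CS xy])
    have d: "C - {y} - {x} = C - {x} - {y}" by blast
    show "sg y C * sg x (C - {y}) *
      (dl (enc (C - {y} - {x}), mx (mx m y) x) q - dl (enc (C - {y} - {x}), mx m y) q
       - dl (enc (C - {y} - {x}), mx m x) q + dl (enc (C - {y} - {x}), m) q) =
      - (sg x C * sg y (C - {x}) *
      (dl (enc (C - {x} - {y}), mx (mx m x) y) q - dl (enc (C - {x} - {y}), mx m x) q
       - dl (enc (C - {x} - {y}), mx m y) q + dl (enc (C - {x} - {y}), m) q))"
      unfolding s d c by (simp add: algebra_simps)
  qed
  finally show "lin DD (DD p) q = 0" .
qed

lemma esum_DD:
  assumes "p \<in> cells k"
  shows "esum (DD p) = 0"
proof -
  obtain C m where p: "p = (enc C, m)" "clq C" "card C = k" "m \<in> tmon Sig I"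
    using assms by (rule cellsE)
  have CS: "C \<subseteq> Sig" using p(2) by (rule clq_Sig)
  have fC: "finite C" using p(2) by (rule clq_fin)
  have "esum (DD p) = esum (Dg p) - esum (Dl p)"
    unfolding DD_def[of p] by (rule esum_diff[OF supp_Dg(1)[OF assms] supp_Dl(1)[OF assms]])
  also have "\<dots> = 0"
    unfolding p(1) Dg_enc[OF CS] Dl_enc[OF CS] esum_sum_dl[OF fC] by simp
  finally show ?thesis .
qed

lemma act_lin:
  assumes "finite (supp f)"
  shows "act I m' f = lin (Am m') f"
proof
  fix p :: "nat \<times> 'a list set"
  obtain j x where p: "p = (j, x)" by (cases p)
  have "lin (Am m') f (j, x) = (\<Sum>p\<in>supp f. if fst p = j \<and> tmult I m' (snd p) = x then f p else 0)"
    unfolding lin_def Am_def by (intro sum.cong refl) (auto simp: dl_def)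
  also have "\<dots> = (\<Sum>p\<in>{p\<in>supp f. fst p = j \<and> tmult I m' (snd p) = x}. f p)"
    using assms by (simp add: sum.inter_filter)
  also have "\<dots> = (\<Sum>p\<in>(\<lambda>y. (j, y)) ` {y. f (j, y) \<noteq> 0 \<and> tmult I m' y = x}. f p)"
    by (intro sum.cong refl) (auto simp: supp_def)
  also have "\<dots> = (\<Sum>y\<in>{y. f (j, y) \<noteq> 0 \<and> tmult I m' y = x}. f (j, y))"
    by (subst sum.reindex) (auto simp: inj_on_def)
  also have "\<dots> = act I m' f (j, x)" by (simp add: act_def)
  finally show "act I m' f p = lin (Am m') f p" using p by simp
qed

lemma DD_act:
  assumes "p \<in> cells k"
  shows "DD (fst p, tmult I m' (snd p)) = lin (Am m') (DD p)"
proof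
  fix q
  obtain C m where p: "p = (enc C, m)" "clq C" "card C = k" "m \<in> tmon Sig I"
    using assms by (rule cellsE)
  have CS: "C \<subseteq> Sig" using p(2) by (rule clq_Sig)
  have fC: "finite C" using p(2) by (rule clq_fin)
  have "lin (Am m') (DD p) q = lin (Am m') (Dg p) q - lin (Am m') (Dl p) q"
    unfolding DD_def[of p] using lin_diff[OF supp_Dg(1)[OF assms] supp_Dl(1)[OF assms]] by metis
  also have "\<dots> = (\<Sum>x\<in>C. sg x C * Am m' (enc (C - {x}), mx m x) q) - (\<Sum>x\<in>C. sg x C * Am m' (enc (C - {x}), m) q)"
    unfolding p(1) Dg_enc[OF CS] Dl_enc[OF CS] lin_sum_dl[OF fC] ..
  also have "\<dots> = DD (fst p, tmult I m' (snd p)) q"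
    unfolding p(1) using CS by (simp add: DD_enc Am_def tmult_mx right_diff_distrib sum_subtractf)
  finally show "DD (fst p, tmult I m' (snd p)) q = lin (Am m') (DD p) q" by simp
qed

lemma esum_Am: "esum (Am m' p) = 1"
  unfolding Am_def esum_def supp_dl by (simp add: dl_def)

lemma finite_supp_Am: "finite (supp (Am m' p))"
  by (simp add: Am_def supp_dl)

end


lemma lin_vanish: "(\<And>p. p \<in> supp f \<Longrightarrow> D p q = 0) \<Longrightarrow> lin D f q = 0"
  by (simp add: lin_def)

lemma lin_agree:
  assumes "finite (supp f)" "supp f' \<subseteq> supp f"
    "\<And>p. p \<in> supp f \<Longrightarrow> D p q \<noteq> 0 \<Longrightarrow> f p = f' p"
  shows "lin D f q = lin D f' q"
proof -
  have "lin D f q = (\<Sum>p\<in>supp f. f p * D p q)" by (rule lin_eq) (use assms in auto)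
  also have "\<dots> = (\<Sum>p\<in>supp f. f' p * D p q)"
    by (rule sum.cong[OF refl]) (use assms(3) in force)
  also have "\<dots> = lin D f' q" by (rule lin_eq[symmetric]) (use assms in auto)
  finally show ?thesis .
qed

lemma lin_zeroD: "lin (\<lambda>p q. 0) f = (\<lambda>q. 0)"
  by (simp add: lin_def)

context tm begin

abbreviation FM :: "nat \<Rightarrow> (nat \<times> 'a list set \<Rightarrow> int) set" where
  "FM k \<equiv> free_mod Sig I (JJ k)"

lemma FM_iff: "f \<in> FM k \<longleftrightarrow> finite (supp f) \<and> supp f \<subseteq> cells k"
  by (simp add: free_mod_iff cells_def)

lemma zero_FM: "(\<lambda>_. 0) \<in> FM k"
  by (simp add: FM_iff)

lemma lin_in:
  assumes "f \<in> FM k" "\<And>p. p \<in> cells k \<Longrightarrow> finite (supp (D p)) \<and> supp (D p) \<subseteq> cells k'"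
  shows "lin D f \<in> FM k'"
proof -
  have f: "finite (supp f)" "supp f \<subseteq> cells k" using assms(1) by (auto simp: FM_iff)
  have "finite (supp (lin D f))" using f assms(2) by (intro finite_supp_lin) auto
  moreover have "supp (lin D f) \<subseteq> cells k'" using supp_lin[of D f] f assms(2) by blast
  ultimately show ?thesis by (simp add: FM_iff)
qed

lemma dd_in:
  assumes "f \<in> FM k"
  shows "lin DD f \<in> FM (k - 1)"
  using assms
proof (rule lin_in)
  fix p assume "p \<in> cells k"
  then show "finite (supp (DD p)) \<and> supp (DD p) \<subseteq> cells (k - 1)"
    using supp_DD[of p k] by blast
qed

lemma cn_in:
  assumes "f \<in> FM k"
  shows "lin Cn f \<in> FM (Suc k)"
  using assms
proof (rule lin_in)
  fix p assume "p \<in> cells k"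
  then show "finite (supp (Cn p)) \<and> supp (Cn p) \<subseteq> cells (Suc k)"
    using supp_Cn[of p k] by blast
qed

lemma diff_FM: "f \<in> FM k \<Longrightarrow> g \<in> FM k \<Longrightarrow> (\<lambda>p. f p - g p) \<in> FM k"
  using supp_diff[of f g] by (auto simp: FM_iff intro: finite_subset)

lemma add_FM: "f \<in> FM k \<Longrightarrow> g \<in> FM k \<Longrightarrow> fadd f g \<in> FM k"
  using supp_add[of f g] by (auto simp: FM_iff fadd_def intro: finite_subset)

lemma dd_add: "f \<in> FM k \<Longrightarrow> g \<in> FM k \<Longrightarrow> lin DD (fadd f g) = fadd (lin DD f) (lin DD g)"
  unfolding fadd_def by (rule lin_add) (auto simp: FM_iff)

lemma dd_diff: "f \<in> FM k \<Longrightarrow> g \<in> FM k \<Longrightarrow> lin DD (\<lambda>p. f p - g p) = (\<lambda>q. lin DD f q - lin DD g q)"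
  by (rule lin_diff) (auto simp: FM_iff)

lemma dd_act:
  assumes "f \<in> FM k"
  shows "lin DD (act I m' f) = act I m' (lin DD f)"
proof -
  have f: "finite (supp f)" "supp f \<subseteq> cells k" using assms by (auto simp: FM_iff)
  have "lin DD (act I m' f) = lin DD (lin (Am m') f)" using act_lin[OF f(1)] by simp
  also have "\<dots> = lin (\<lambda>p. lin DD (Am m' p)) f"
    by (rule lin_comp[OF f(1) finite_supp_Am])
  also have "\<dots> = lin (\<lambda>p. lin (Am m') (DD p)) f"
  proof (rule lin_cong)
    fix p assume "p \<in> supp f"
    then have "p \<in> cells k" using f by blast
    then show "lin DD (Am m' p) = lin (Am m') (DD p)"
      using DD_act[of p k m'] by (simp add: Am_def lin_dl)
  qed
  also have "\<dots> = lin (Am m') (lin DD f)"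
    using f supp_DD(1) by (intro lin_comp[symmetric]) auto
  also have "\<dots> = act I m' (lin DD f)"
    using dd_in[OF assms] by (intro act_lin[symmetric]) (simp add: FM_iff)
  finally show ?thesis .
qed

lemma dd_dd:
  assumes "f \<in> FM k"
  shows "lin DD (lin DD f) = (\<lambda>_. 0)"
proof -
  have f: "finite (supp f)" "supp f \<subseteq> cells k" using assms by (auto simp: FM_iff)
  have "lin DD (lin DD f) = lin (\<lambda>p. lin DD (DD p)) f"
    using f supp_DD(1) by (intro lin_comp) auto
  also have "\<dots> = lin (\<lambda>p q. 0) f"
    by (rule lin_cong) (use f DD_DD in blast)
  finally show ?thesis by (simp add: lin_zeroD)
qed

lemma ee_dd:
  assumes "f \<in> FM k"
  shows "esum (lin DD f) = 0"
proof -
  have f: "finite (supp f)" "supp f \<subseteq> cells k" using assms by (auto simp: FM_iff)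
  have "esum (lin DD f) = (\<Sum>p\<in>supp f. f p * esum (DD p))"
    using f supp_DD(1) by (intro esum_lin) auto
  also have "\<dots> = 0" using f esum_DD by (intro sum.neutral) auto
  finally show ?thesis .
qed

lemma ee_act:
  assumes "f \<in> FM k"
  shows "esum (act I m' f) = esum f"
proof -
  have f: "finite (supp f)" using assms by (simp add: FM_iff)
  have "esum (act I m' f) = esum (lin (Am m') f)" using act_lin[OF f] by simp
  also have "\<dots> = (\<Sum>p\<in>supp f. f p * esum (Am m' p))"
    by (rule esum_lin[OF f finite_supp_Am])
  also have "\<dots> = esum f" by (simp only: esum_Am) (simp add: esum_def)
  finally show ?thesis .
qed

lemma ee_add: "f \<in> FM k \<Longrightarrow> g \<in> FM k \<Longrightarrow> esum (fadd f g) = esum f + esum g"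
  unfolding fadd_def by (rule esum_add) (auto simp: FM_iff)

lemma empty_clq: "clq {}"
  by (simp add: clq_def)

lemma ee_surj: "esum ` FM 0 = UNIV"
proof -
  have c: "(enc {}, trace I []) \<in> cells 0"
    using empty_clq by (rule cell_in) (auto intro: trace_in_tmon)
  have "z \<in> esum ` FM 0" for z
  proof
    let ?f = "\<lambda>q. z * dl (enc {}, trace I []) q"
    have s: "supp ?f \<subseteq> {(enc {}, trace I [])}" by (auto simp: supp_def dl_def)
    then show "?f \<in> FM 0" using c by (auto simp: FM_iff intro: finite_subset)
    show "z = esum ?f" using esum_eq[OF _ s] by (simp add: dl_def)
  qed
  then show ?thesis by blast
qed

end


context tm begin

lemma Dg_cells0:
  assumes "p \<in> cells 0"
  shows "Dg p = (\<lambda>q. 0)"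
proof -
  obtain C m where p: "p = (enc C, m)" "clq C" "card C = 0" "m \<in> tmon Sig I"
    using assms by (rule cellsE)
  have "C = {}" using p(3) clq_fin[OF p(2)] by simp
  then show ?thesis using p(1) by (simp add: Dg_enc)
qed

lemma DD_split: "DD = (\<lambda>p q. Dg p q - Dl p q)"
  by (simp add: DD_def fun_eq_iff)

lemma cone_fun:
  assumes "h \<in> FM k" "\<And>p. p \<in> supp h \<Longrightarrow> rep (top (dec (fst p)) (snd p)) \<noteq> []"
  shows "(\<lambda>q. lin Dg (lin Cn h) q + lin Cn (lin Dg h) q) = h"
proof -
  have h: "finite (supp h)" "supp h \<subseteq> cells k" using assms(1) by (auto simp: FM_iff)
  have 1: "lin Dg (lin Cn h) = lin (\<lambda>p. lin Dg (Cn p)) h"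
    using h supp_Cn(1) by (intro lin_comp) auto
  have 2: "lin Cn (lin Dg h) = lin (\<lambda>p. lin Cn (Dg p)) h"
    using h supp_Dg(1) by (intro lin_comp) auto
  have "(\<lambda>q. lin Dg (lin Cn h) q + lin Cn (lin Dg h) q) =
      lin (\<lambda>p q. lin Dg (Cn p) q + lin Cn (Dg p) q) h"
    unfolding 1 2 lin_D_add ..
  also have "\<dots> = lin dl h"
  proof (rule lin_cong)
    fix p assume p: "p \<in> supp h"
    show "(\<lambda>q. lin Dg (Cn p) q + lin Cn (Dg p) q) = dl p"
      by (rule cone_id) (use p h assms(2) in auto)
  qed
  also have "\<dots> = h" by (rule lin_id[OF h(1)])
  finally show ?thesis .
qed

lemma exact_main:
  assumes "f \<in> FM k" "\<forall>p\<in>supp f. lev p < N" "if k = 0 then esum f = 0 else lin DD f = (\<lambda>_. 0)"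
  shows "\<exists>g\<in>FM (Suc k). f = lin DD g"
  using assms
proof (induction N arbitrary: f)
  case 0
  then have "supp f = {}" by auto
  then have "f = (\<lambda>_. 0)" by (auto simp: supp_def)
  then show ?case using zero_FM by (intro bexI[of _ "\<lambda>_. 0"]) auto
next
  case (Suc N)
  have f: "finite (supp f)" "supp f \<subseteq> cells k" using Suc.prems(1) by (auto simp: FM_iff)
  show ?case
  proof (cases "k = 0 \<and> N = 0")
    case True
    let ?p0 = "(enc {}, trace I [])"
    have s: "supp f \<subseteq> {?p0}"
    proof
      fix p assume p: "p \<in> supp f"
      then have pc: "p \<in> cells 0" and pl: "lev p = 0" using f True Suc.prems(2) by auto
      obtain C m where c: "p = (enc C, m)" "clq C" "card C = 0" "m \<in> tmon Sig I"
        using pc by (rule cellsE)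
      have "C = {}" using c(3) clq_fin[OF c(2)] by simp
      moreover have "rep m = []" using pl c(1) by (simp add: lev_def)
      then have "m = trace I []" using tmon_rep(1)[OF c(4)] by simp
      ultimately show "p \<in> {?p0}" using c(1) by simp
    qed
    have "esum f = (\<Sum>p\<in>{?p0}. f p)" by (rule esum_eq[OF _ s]) simp
    then have "f ?p0 = 0" using Suc.prems(3) True by simp
    then have "f = (\<lambda>_. 0)" using s by (auto simp: supp_def fun_eq_iff)
    then show ?thesis using zero_FM by (intro bexI[of _ "\<lambda>_. 0"]) auto
  next
    case False
    define h where "h = (\<lambda>p. if lev p = N then f p else 0)"
    define g where "g = lin Cn h"
    define f' where "f' = (\<lambda>p. f p - lin DD g p)"
    have hs: "supp h \<subseteq> supp f" by (auto simp: h_def supp_def)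
    have hF: "h \<in> FM k" using f hs by (auto simp: FM_iff intro: finite_subset)
    have hlev: "lev p = N" if "p \<in> supp h" for p using that by (auto simp: h_def supp_def split: if_splits)
    have gF: "g \<in> FM (Suc k)" unfolding g_def by (rule cn_in[OF hF])
    have dgF: "lin DD g \<in> FM k" using dd_in[OF gF] by simp
    have f'F: "f' \<in> FM k" unfolding f'_def by (rule diff_FM[OF Suc.prems(1) dgF])
    have Z: "if k = 0 then esum f' = 0 else lin DD f' = (\<lambda>_. 0)"
    proof (cases "k = 0")
      case True
      have "esum f' = esum f - esum (lin DD g)" unfolding f'_def
        by (rule esum_diff) (use f dgF in \<open>auto simp: FM_iff\<close>)
      then show ?thesis using True Suc.prems(3) ee_dd[OF gF] by simp
    next
      case False
      have "lin DD f' = (\<lambda>q. lin DD f q - lin DD (lin DD g) q)" unfolding f'_def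
        by (rule dd_diff[OF Suc.prems(1) dgF])
      then show ?thesis using False Suc.prems(3) dd_dd[OF gF] by simp
    qed
    have gfin: "finite (supp g)" "supp g \<subseteq> cells (Suc k)" using gF by (auto simp: FM_iff)
    have glev: "Suc (lev p) = N" if "p \<in> supp g" for p
    proof -
      from that obtain r where r: "r \<in> supp h" "p \<in> supp (Cn r)"
        using supp_lin[of Cn h] unfolding g_def by blast
      have "r \<in> cells k" using r(1) hF by (auto simp: FM_iff)
      then have "Suc (lev p) = lev r" using lev_Cn r(2) by blast
      then show ?thesis using hlev[OF r(1)] by simp
    qed
    have Dl0: "lin Dl g q = 0" if "lev q \<ge> N" for q
    proof (rule lin_vanish)
      fix p assume p: "p \<in> supp g"
      show "Dl p q = 0"
      proof (rule ccontr)
        assume "Dl p q \<noteq> 0"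
        then have "lev q = lev p" using lev_Dl[of p "Suc k" q] p gfin by (auto simp: supp_def)
        then show False using glev[OF p] that by simp
      qed
    qed
    have Dg0: "lin Dg g q = 0" if "lev q > N" for q
    proof (rule lin_vanish)
      fix p assume p: "p \<in> supp g"
      show "Dg p q = 0"
      proof (rule ccontr)
        assume "Dg p q \<noteq> 0"
        then have "lev q = Suc (lev p)" using lev_Dg[of p "Suc k" q] p gfin by (auto simp: supp_def)
        then show False using glev[OF p] that by simp
      qed
    qed
    have ddg: "lin DD g q = lin Dg g q - lin Dl g q" for q
      by (simp add: DD_split lin_D_diff)
    have Dgh: "lin Dg h = (\<lambda>_. 0)"
    proof (cases "k = 0")
      case True
      have "lin Dg h = lin (\<lambda>p q. 0) h"
      proof (rule lin_cong)
        fix p assume "p \<in> supp h"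
        then have "p \<in> cells 0" using hF True by (auto simp: FM_iff)
        then show "Dg p = (\<lambda>q. 0)" by (rule Dg_cells0)
      qed
      then show ?thesis by (simp add: lin_zeroD)
    next
      case False
      then have ddf: "lin DD f = (\<lambda>_. 0)" using Suc.prems(3) by simp
      show ?thesis
      proof
        fix q
        show "lin Dg h q = 0"
        proof (cases "lev q = Suc N")
          case True
          have "lin Dg f q = lin Dg h q"
          proof (rule lin_agree[OF f(1) hs])
            fix p assume p: "p \<in> supp f" "Dg p q \<noteq> 0"
            then have "lev q = Suc (lev p)" using lev_Dg[of p k q] f by (auto simp: supp_def)
            then show "f p = h p" using True by (simp add: h_def)
          qed
          moreover have "lin Dl f q = 0"
          proof (rule lin_vanish)
            fix p assume p: "p \<in> supp f"
            show "Dl p q = 0"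
            proof (rule ccontr)
              assume "Dl p q \<noteq> 0"
              then have "lev q = lev p" using lev_Dl[of p k q] p f by (auto simp: supp_def)
              then show False using True Suc.prems(2) p by auto
            qed
          qed
          moreover have "lin DD f q = lin Dg f q - lin Dl f q"
            by (simp add: DD_split lin_D_diff)
          moreover have "lin DD f q = 0" using ddf by simp
          ultimately show ?thesis by simp
        next
          case False
          show ?thesis
          proof (rule lin_vanish)
            fix p assume p: "p \<in> supp h"
            show "Dg p q = 0"
            proof (rule ccontr)
              assume "Dg p q \<noteq> 0"
              then have "lev q = Suc (lev p)" using lev_Dg[of p k q] p hF by (auto simp: supp_def FM_iff)
              then show False using False hlev[OF p] by simp
            qed
          qed
        qed
      qed
    qed
    have ne: "rep (top (dec (fst p)) (snd p)) \<noteq> []" if p: "p \<in> supp h" for p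
    proof -
      have "p \<in> cells k" using p hF by (auto simp: FM_iff)
      then obtain C m where c: "p = (enc C, m)" "clq C" "card C = k" "m \<in> tmon Sig I"
        by (rule cellsE)
      have "length (rep (top C m)) = N + k"
        using length_top[OF clq_fin[OF c(2)]] hlev[OF p] c(1,3) by (simp add: lev_def)
      then show ?thesis using False c(1) clq_Sig[OF c(2)] by auto
    qed
    have cone: "(\<lambda>q. lin Dg (lin Cn h) q + lin Cn (lin Dg h) q) = h"
      by (rule cone_fun[OF hF ne])
    have gq: "lin Dg g q = h q" for q
      using fun_cong[OF cone, of q] unfolding Dgh g_def by simp
    have f'lev: "\<forall>p\<in>supp f'. lev p < N"
    proof
      fix q assume q: "q \<in> supp f'"
      show "lev q < N"
      proof (rule ccontr)
        assume "\<not> lev q < N"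
        then have qN: "lev q \<ge> N" by simp
        have e: "f' q = f q - lin Dg g q" using Dl0[OF qN] by (simp add: f'_def ddg)
        have "f' q = 0"
        proof (cases "lev q = N")
          case True then show ?thesis using e gq by (simp add: h_def)
        next
          case False
          then have "lev q > N" using qN by simp
          moreover have "f q = 0"
          proof (rule ccontr)
            assume "f q \<noteq> 0"
            then have "q \<in> supp f" by (simp add: supp_def)
            then have "lev q < Suc N" using Suc.prems(2) by blast
            then show False using \<open>lev q > N\<close> by simp
          qed
          ultimately show ?thesis using e Dg0 by simp
        qed
        then show False using q by (simp add: supp_def)
      qed
    qed
    obtain g' where g': "g' \<in> FM (Suc k)" "f' = lin DD g'" using Suc.IH[OF f'F f'lev Z] by blast
    have "f = fadd (lin DD g) (lin DD g')"
    proof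
      fix p
      have "f' p = lin DD g' p" using g'(2) by simp
      then show "f p = fadd (lin DD g) (lin DD g') p" by (simp add: fadd_def f'_def)
    qed
    also have "\<dots> = lin DD (fadd g g')" by (rule dd_add[symmetric, OF gF g'(1)])
    finally show ?thesis using add_FM[OF gF g'(1)] by blast
  qed
qed

lemma exact:
  assumes "f \<in> FM k" "if k = 0 then esum f = 0 else lin DD f = (\<lambda>_. 0)"
  shows "\<exists>g\<in>FM (Suc k). f = lin DD g"
proof -
  have "finite (lev ` supp f)" using assms(1) by (simp add: FM_iff)
  then obtain N where "\<forall>x\<in>lev ` supp f. x < N" using finite_nat_set_iff_bounded by blast
  then have "\<forall>p\<in>supp f. lev p < N" by blast
  then show ?thesis using exact_main assms by blast
qed

end

theorem corollary2p4:
  fixes Sig :: "'a set" and I :: "('a \<times> 'a) set" and n :: nat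
  assumes "finite Sig"
    and "I \<subseteq> Sig \<times> Sig"
    and "sym I"
    and "irrefl I"
    and "1 \<le> n"
    and "\<forall>C \<subseteq> Sig. (\<forall>a \<in> C. \<forall>b \<in> C. a \<noteq> b \<longrightarrow> (a, b) \<in> I) \<longrightarrow> card C \<le> n"
  shows "has_free_resolution_le Sig I n"
proof -
  obtain ix :: "'a \<Rightarrow> nat" and N where ix: "ix ` Sig = {i. i < N}" "inj_on ix Sig"
    using finite_imp_inj_to_nat_seg[OF assms(1)] by blast
  interpret tm Sig I ix
    using assms(1-4) ix(2) by unfold_locales
  have Jn: "JJ (Suc n) = {}"
  proof -
    have "\<not> (clq C \<and> card C = Suc n)" for C
    proof
      assume c: "clq C \<and> card C = Suc n"
      then have "C \<subseteq> Sig" "\<forall>a \<in> C. \<forall>b \<in> C. a \<noteq> b \<longrightarrow> (a, b) \<in> I"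
        unfolding clq_def by blast+
      then have "card C \<le> n" using assms(6) by blast
      then show False using c by simp
    qed
    then show ?thesis by (auto simp: JJ_def)
  qed
  have FMn: "f = (\<lambda>_. 0)" if "f \<in> FM (Suc n)" for f
  proof -
    have "supp f \<subseteq> cells (Suc n)" using that by (simp add: FM_iff)
    then have "supp f = {}" using Jn by (simp add: cells_def)
    then show ?thesis by (auto simp: supp_def fun_eq_iff)
  qed
  have aug: "augmentation Sig I (JJ 0) esum"
    unfolding augmentation_def
  proof (intro conjI ballI)
    fix f g assume "f \<in> FM 0" "g \<in> FM 0"
    then show "esum (fadd f g) = esum f + esum g" by (rule ee_add)
  next
    fix m f assume "f \<in> FM 0"
    then show "esum (act I m f) = esum f" by (rule ee_act)
  next
    show "esum ` FM 0 = UNIV" by (rule ee_surj)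
  qed
  have hom: "\<forall>k\<in>{1..n}. zm_hom Sig I (JJ k) (JJ (k - 1)) (lin DD)"
  proof
    fix k
    show "zm_hom Sig I (JJ k) (JJ (k - 1)) (lin DD)"
      unfolding zm_hom_def
    proof (intro conjI ballI)
      show "lin DD ` FM k \<subseteq> FM (k - 1)" using dd_in by blast
    next
      fix f g assume "f \<in> FM k" "g \<in> FM k"
      then show "lin DD (fadd f g) = fadd (lin DD f) (lin DD g)" by (rule dd_add)
    next
      fix m f assume "f \<in> FM k"
      then show "lin DD (act I m f) = act I m (lin DD f)" by (rule dd_act)
    qed
  qed
  have ex0: "lin DD ` FM 1 = {f \<in> FM 0. esum f = 0}"
  proof
    show "lin DD ` FM 1 \<subseteq> {f \<in> FM 0. esum f = 0}"
      using dd_in[of _ 1] ee_dd[of _ 1] by auto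
    show "{f \<in> FM 0. esum f = 0} \<subseteq> lin DD ` FM 1"
    proof
      fix f assume "f \<in> {f \<in> FM 0. esum f = 0}"
      then have "f \<in> FM 0" "esum f = 0" by auto
      then obtain g where "g \<in> FM (Suc 0)" "f = lin DD g" using exact[of f 0] by auto
      then show "f \<in> lin DD ` FM 1" by simp
    qed
  qed
  have exk: "\<forall>k. 1 \<le> k \<and> k < n \<longrightarrow> lin DD ` FM (k + 1) = {f \<in> FM k. lin DD f = (\<lambda>_. 0)}"
  proof (intro allI impI)
    fix k assume k: "1 \<le> k \<and> k < n"
    show "lin DD ` FM (k + 1) = {f \<in> FM k. lin DD f = (\<lambda>_. 0)}"
    proof
      show "lin DD ` FM (k + 1) \<subseteq> {f \<in> FM k. lin DD f = (\<lambda>_. 0)}"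
        using dd_in[of _ "k + 1"] dd_dd[of _ "k + 1"] by auto
      show "{f \<in> FM k. lin DD f = (\<lambda>_. 0)} \<subseteq> lin DD ` FM (k + 1)"
      proof
        fix f assume "f \<in> {f \<in> FM k. lin DD f = (\<lambda>_. 0)}"
        then have "f \<in> FM k" "lin DD f = (\<lambda>_. 0)" by auto
        then obtain g where "g \<in> FM (Suc k)" "f = lin DD g" using exact[of f k] k by auto
        then show "f \<in> lin DD ` FM (k + 1)" by simp
      qed
    qed
  qed
  have inj: "inj_on (lin DD) (FM n)"
  proof (rule inj_onI)
    fix f f' assume ff: "f \<in> FM n" "f' \<in> FM n" "lin DD f = lin DD f'"
    have dF: "(\<lambda>p. f p - f' p) \<in> FM n" by (rule diff_FM[OF ff(1,2)])
    have "lin DD (\<lambda>p. f p - f' p) = (\<lambda>q. lin DD f q - lin DD f' q)" by (rule dd_diff[OF ff(1,2)])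
    then have "lin DD (\<lambda>p. f p - f' p) = (\<lambda>_. 0)" using ff(3) by simp
    then obtain g where g: "g \<in> FM (Suc n)" "(\<lambda>p. f p - f' p) = lin DD g"
      using exact[OF dF] assms(5) by auto
    then have "(\<lambda>p. f p - f' p) = (\<lambda>_. 0)" using FMn[OF g(1)] by simp
    then show "f = f'" by (auto simp: fun_eq_iff dest: fun_cong)
  qed
  have "free_resolution Sig I n JJ (\<lambda>k. lin DD) esum"
    unfolding free_resolution_def using assms(5) aug hom ex0 exk inj by simp
  then show ?thesis unfolding has_free_resolution_le_def by blast
qed


end
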